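(* For all $x\in\mathbb{R}^n$, $\lambda\in\mathbb{R}^m$ with $x_i\ge0$ for $i\in[n_b]$ and $\lambda_j\ge0$ for $j\in[m_I]$, $$\operatorname{dist}((x,\lambda),\Omega)\le\theta\big(\|(x,\lambda)\|^2+1\big)^{1/2}\operatorname{dist}(0,T_\ell(x,\lambda)).$$
   Context: LP: $\min_{x\in\mathbb{R}^n}c^\top x$ s.t. $A_Ix\le b_I$, $A_Ex=b_E$, $x_1,\dots,x_{n_b}\ge0$, where $A_I\in\mathbb{R}^{m_I\times n}$, $A_E\in\mathbb{R}^{m_E\times n}$, $m=m_I+m_E$, $A=[A_I;A_E]$, $b=[b_I;b_E]$, $n_b\in[n]$. Write $x_b=(x_1,\dots,x_{n_b})$, $\lambda_I=(\lambda_1,\dots,\lambda_{m_I})$. For $v\in\mathbb{R}^N$ and $k\le N$, $[v]_+^k$ (resp. $[v]_-^k$) is the projection of $v$ onto $\mathbb{R}_+^k\times\mathbb{R}^{N-k}$ (resp. $\mathbb{R}_-^k\times\mathbb{R}^{N-k}$). $T_\ell(x,\lambda)=\{(v,u)\in\mathbb{R}^{n+m}: v\in c+A^\top\lambda+N_{\{x_b\ge0\}}(x),\ u\in b-Ax+N_{\{\lambda_I\ge0\}}(\lambda)\}$, where $N_S$ denotes the normal cone of the convex set $S$ (empty outside $S$); $\operatorname{dist}(0,\emptyset)=+\infty$. Assume the LP has an optimal solution, so that $\Omega:=T_\ell^{-1}(0,0)=\{(x,\lambda):x_b\ge0,\lambda_I\ge0,\ c^\top x+b^\top\lambda=0,\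 [A^\top\lambda+c]_-^{n_b}=0,\ [Ax-b]_+^{m_I}=0\}$ is nonempty. $\theta$ is the smallest constant such that $\operatorname{dist}((x,\lambda),\Omega)\le\theta\|[c^\top x+b^\top\lambda;\ [A^\top\lambda+c]_-^{n_b};\ [Ax-b]_+^{m_I}]\|$ for all $(x,\lambda)$ with $x_b\ge0$, $\lambda_I\ge0$. Norms and distances are Euclidean. *)

theory Defs
  imports Complex_Main
begin

text \<open>Vectors of R^k are encoded as functions nat \<Rightarrow> real vanishing at indices \<ge> k;
  matrices of size m x n as functions nat \<Rightarrow> nat \<Rightarrow> real (row i, column j), only
  entries i < m, j < n are used.\<close>

definition vecs :: "nat \<Rightarrow> (nat \<Rightarrow> real) set" where
  "vecs k = {v. \<forall>i\<ge>k. v i = 0}"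

definition ip :: "nat \<Rightarrow> (nat \<Rightarrow> real) \<Rightarrow> (nat \<Rightarrow> real) \<Rightarrow> real" where
  "ip k u v = (\<Sum>i<k. u i * v i)"

definition nrm :: "nat \<Rightarrow> (nat \<Rightarrow> real) \<Rightarrow> real" where
  "nrm k v = sqrt (ip k v v)"

definition pnrm :: "nat \<Rightarrow> nat \<Rightarrow> (nat \<Rightarrow> real) \<Rightarrow> (nat \<Rightarrow> real) \<Rightarrow> real" where
  "pnrm n m u w = sqrt ((nrm n u)\<^sup>2 + (nrm m w)\<^sup>2)"

definition mulv :: "nat \<Rightarrow> nat \<Rightarrow> (nat \<Rightarrow> nat \<Rightarrow> real) \<Rightarrow> (nat \<Rightarrow> real) \<Rightarrow> (nat \<Rightarrow> real)" where
  "mulv m n A x = (\<lambda>i. if i < m then (\<Sum>j<n. A i j * x j) else 0)"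

definition tmulv :: "nat \<Rightarrow> nat \<Rightarrow> (nat \<Rightarrow> nat \<Rightarrow> real) \<Rightarrow> (nat \<Rightarrow> real) \<Rightarrow> (nat \<Rightarrow> real)" where
  "tmulv m n A y = (\<lambda>j. if j < n then (\<Sum>i<m. A i j * y i) else 0)"

definition projp :: "nat \<Rightarrow> (nat \<Rightarrow> real) \<Rightarrow> (nat \<Rightarrow> real)" where
  "projp k v = (\<lambda>i. if i < k then max (v i) 0 else v i)"

definition projm :: "nat \<Rightarrow> (nat \<Rightarrow> real) \<Rightarrow> (nat \<Rightarrow> real)" where
  "projm k v = (\<lambda>i. if i < k then min (v i) 0 else v i)"

definition ncone :: "nat \<Rightarrow> (nat \<Rightarrow> real) set \<Rightarrow> (nat \<Rightarrow> real) \<Rightarrow> (nat \<Rightarrow> real) set" where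
  "ncone N S x = (if x \<in> S then {v \<in> vecs N. \<forall>y\<in>S. ip N v (\<lambda>i. y i - x i) \<le> 0} else {})"

definition nonneg_first :: "nat \<Rightarrow> nat \<Rightarrow> (nat \<Rightarrow> real) set" where
  "nonneg_first N k = {z \<in> vecs N. \<forall>i<k. 0 \<le> z i}"

definition lp_feasible where
  "lp_feasible n m mI nb A b x \<longleftrightarrow> x \<in> vecs n \<and>
     (\<forall>i<mI. mulv m n A x i \<le> b i) \<and> (\<forall>i. mI \<le> i \<and> i < m \<longrightarrow> mulv m n A x i = b i) \<and>
     (\<forall>i<nb. 0 \<le> x i)"

definition lp_has_optimal where
  "lp_has_optimal n m mI nb A b c \<longleftrightarrow>
     (\<exists>x. lp_feasible n m mI nb A b x \<and> (\<forall>y. lp_feasible n m mI nb A b y \<longrightarrow> ip n c x \<le> ip n c y))"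

definition Tl where
  "Tl n m mI nb A b c x y =
     {(v, u). v \<in> vecs n \<and> u \<in> vecs m \<and>
        (\<exists>w \<in> ncone n (nonneg_first n nb) x. v = (\<lambda>i. c i + tmulv m n A y i + w i)) \<and>
        (\<exists>w \<in> ncone m (nonneg_first m mI) y. u = (\<lambda>i. b i - mulv m n A x i + w i))}"

definition Omega where
  "Omega n m mI nb A b c =
     {(x, y). x \<in> vecs n \<and> y \<in> vecs m \<and> ((\<lambda>_. 0), (\<lambda>_. 0)) \<in> Tl n m mI nb A b c x y}"

definition dist_Omega where
  "dist_Omega n m mI nb A b c x y =
     Inf {pnrm n m (\<lambda>i. x i - x' i) (\<lambda>i. y i - y' i) | x' y'. (x', y') \<in> Omega n m mI nb A b c}"

definition dist0_Tl where
  "dist0_Tl n m mI nb A b c x y = Inf {pnrm n m v u | v u. (v, u) \<in> Tl n m mI nb A b c x y}"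

definition residual where
  "residual n m mI nb A b c x y =
     sqrt ((ip n c x + ip m b y)\<^sup>2
       + (nrm n (projm nb (\<lambda>i. tmulv m n A y i + c i)))\<^sup>2
       + (nrm m (projp mI (\<lambda>i. mulv m n A x i - b i)))\<^sup>2)"

definition theta where
  "theta n m mI nb A b c =
     Inf {t. 0 \<le> t \<and> (\<forall>x y. x \<in> nonneg_first n nb \<and> y \<in> nonneg_first m mI \<longrightarrow>
              dist_Omega n m mI nb A b c x y \<le> t * residual n m mI nb A b c x y)}"

end

theory Submission
  imports Defs "HOL-Analysis.Convex"
begin

type_synonym row = "(nat \<Rightarrow> real) \<times> real"

definition sat :: "nat \<Rightarrow> row list \<Rightarrow> (nat \<Rightarrow> real) \<Rightarrow> bool" where
  "sat N R z \<longleftrightarrow> (\<forall>r\<in>set R. ip N (fst r) z \<le> snd r)"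

definition radd :: "row \<Rightarrow> row \<Rightarrow> row" where
  "radd r s = ((\<lambda>i. fst r i + fst s i), snd r + snd s)"
definition rscale :: "real \<Rightarrow> row \<Rightarrow> row" where
  "rscale c r = ((\<lambda>i. c * fst r i), c * snd r)"
definition rzero :: row where
  "rzero = ((\<lambda>_. 0), 0)"

inductive_set rcone :: "row list \<Rightarrow> row set" for R where
  zero: "rzero \<in> rcone R"
| gen: "r \<in> set R \<Longrightarrow> r \<in> rcone R"
| add: "r \<in> rcone R \<Longrightarrow> s \<in> rcone R \<Longrightarrow> radd r s \<in> rcone R"
| scale: "r \<in> rcone R \<Longrightarrow> 0 \<le> c \<Longrightarrow> rscale c r \<in> rcone R"

lemma ip_add: "ip N (\<lambda>i. a i + b i) z = ip N a z + ip N b z"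
  by (simp add: ip_def sum.distrib distrib_right)
lemma ip_scale: "ip N (\<lambda>i. c * a i) z = c * ip N a z"
  by (simp add: ip_def sum_distrib_left mult.assoc)
lemma ip_lin2: "ip N (\<lambda>i. c * a i + d * b i) z = c * ip N a z + d * ip N b z"
  by (simp add: ip_def sum.distrib sum_distrib_left algebra_simps)
lemma ip_add2: "ip N a (\<lambda>i. x i + y i) = ip N a x + ip N a y"
  by (simp add: ip_def sum.distrib distrib_left)
lemma ip_scale2: "ip N a (\<lambda>i. c * x i) = c * ip N a x"
  by (simp add: ip_def sum_distrib_left algebra_simps)
lemma ip_diff2: "ip N a (\<lambda>i. x i - y i) = ip N a x - ip N a y"
  by (simp add: ip_def sum_subtractf right_diff_distrib)
lemma ip_zero[simp]: "ip N (\<lambda>_. 0) z = 0" "ip 0 a z = 0"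
  by (simp_all add: ip_def)
lemma ip_Suc: "ip (Suc N) a z = ip N a z + a N * z N"
  by (simp add: ip_def)
lemma ip_cong: "(\<And>i. i < N \<Longrightarrow> a i = a' i) \<Longrightarrow> (\<And>i. i < N \<Longrightarrow> z i = z' i) \<Longrightarrow> ip N a z = ip N a' z'"
  by (simp add: ip_def)
lemma ip_delta: "j < N \<Longrightarrow> ip N a (\<lambda>i. if i = j then d else 0) = a j * d"
  by (simp add: ip_def if_distrib cong: if_cong)
lemma ip_delta1: "j < N \<Longrightarrow> ip N (\<lambda>i. if i = j then d else 0) z = d * z j"
proof -
  assume "j < N"
  have "ip N (\<lambda>i. if i = j then d else 0) z = (\<Sum>i<N. if i = j then d * z j else 0)"
    unfolding ip_def by (rule sum.cong) auto
  then show ?thesis using \<open>j < N\<close> by simp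
qed

lemma sat_cong: "(\<And>i. i < N \<Longrightarrow> z i = z' i) \<Longrightarrow> sat N R z = sat N R z'"
  unfolding sat_def by (metis ip_cong)
lemma sat_append[simp]: "sat N (R1 @ R2) z \<longleftrightarrow> sat N R1 z \<and> sat N R2 z"
  by (auto simp: sat_def)
lemma sat_map_upt[simp]: "sat N (map f [0..<k]) z \<longleftrightarrow> (\<forall>i<k. ip N (fst (f i)) z \<le> snd (f i))"
  by (auto simp: sat_def)
lemma sat_Cons[simp]: "sat N (r # R) z \<longleftrightarrow> ip N (fst r) z \<le> snd r \<and> sat N R z"
  by (auto simp: sat_def)
lemma sat_Nil[simp]: "sat N [] z"
  by (auto simp: sat_def)

lemma rcone_valid: "e \<in> rcone R \<Longrightarrow> sat N R z \<Longrightarrow> ip N (fst e) z \<le> snd e"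
proof (induction rule: rcone.induct)
  case zero then show ?case by (simp add: rzero_def)
next
  case (gen r) then show ?case by (simp add: sat_def)
next
  case (add r s) then show ?case by (simp add: radd_def ip_add)
next
  case (scale r c) then show ?case by (simp add: rscale_def ip_scale mult_left_mono)
qed

lemma rcone_mono: "e \<in> rcone R' \<Longrightarrow> set R' \<subseteq> rcone R \<Longrightarrow> e \<in> rcone R"
  by (induction rule: rcone.induct) (auto intro: rcone.intros)

lemma rcone_coord0: "e \<in> rcone R \<Longrightarrow> (\<forall>r\<in>set R. fst r k = 0) \<Longrightarrow> fst e k = 0"
  by (induction rule: rcone.induct) (auto simp: rzero_def radd_def rscale_def)

definition fmc :: "nat \<Rightarrow> row \<Rightarrow> row \<Rightarrow> row" where
  "fmc N p q = radd (rscale (- fst q N) p) (rscale (fst p N) q)"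

definition fm :: "nat \<Rightarrow> row list \<Rightarrow> row list" where
  "fm N R = filter (\<lambda>r. fst r N = 0) R @
     concat (map (\<lambda>p. map (\<lambda>q. fmc N p q) (filter (\<lambda>q. fst q N < 0) R)) (filter (\<lambda>p. fst p N > 0) R))"

lemma fm_cone: "set (fm N R) \<subseteq> rcone R"
proof
  fix r assume "r \<in> set (fm N R)"
  then consider "r \<in> set R" | p q where "p \<in> set R" "q \<in> set R" "fst p N > 0" "fst q N < 0" "r = fmc N p q"
    unfolding fm_def by auto
  then show "r \<in> rcone R"
  proof cases
    case 1 then show ?thesis by (rule rcone.gen)
  next
    case 2
    have "p \<in> rcone R" "q \<in> rcone R" using 2 by (auto intro: rcone.gen)
    then show ?thesis unfolding 2 fmc_def
      using 2 by (intro rcone.add rcone.scale) auto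
  qed
qed

lemma fm_zero: "r \<in> set (fm N R) \<Longrightarrow> fst r N = 0"
  unfolding fm_def fmc_def by (auto simp: radd_def rscale_def)

lemma fm_sound: "sat (Suc N) R w \<Longrightarrow> sat N (fm N R) w"
proof -
  assume w: "sat (Suc N) R w"
  show ?thesis unfolding sat_def
  proof
    fix r assume r: "r \<in> set (fm N R)"
    then have "r \<in> rcone R" using fm_cone by blast
    then have "ip (Suc N) (fst r) w \<le> snd r" using rcone_valid w by blast
    then show "ip N (fst r) w \<le> snd r" using fm_zero[OF r] by (simp add: ip_Suc)
  qed
qed

lemma fm_complete:
  assumes z: "sat N (fm N R) z"
  shows "\<exists>s. sat (Suc N) R (z(N := s))"
proof -
  define neg where "neg = filter (\<lambda>q. fst q N < 0) R"
  define pos where "pos = filter (\<lambda>p. fst p N > 0) R"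
  define lo where "lo q = (ip N (fst q) z - snd q) / (- fst q N)" for q
  define up where "up p = (snd p - ip N (fst p) z) / fst p N" for p
  define L where "L = lo ` set neg"
  define U where "U = up ` set pos"
  have finL: "finite L" and finU: "finite U" by (auto simp: L_def U_def)
  have LU: "l \<le> u" if lu: "l \<in> L" "u \<in> U" for l u
  proof -
    obtain q where q: "q \<in> set R" "fst q N < 0" "l = lo q" using lu unfolding L_def neg_def set_filter by blast
    obtain p where p: "p \<in> set R" "fst p N > 0" "u = up p" using lu unfolding U_def pos_def set_filter by blast
    have m1: "fmc N p q \<in> set (map (\<lambda>q. fmc N p q) (filter (\<lambda>q. fst q N < 0) R))" using q by simp
    have m2: "map (\<lambda>q. fmc N p q) (filter (\<lambda>q. fst q N < 0) R) \<in>
       set (map (\<lambda>p. map (\<lambda>q. fmc N p q) (filter (\<lambda>q. fst q N < 0) R)) (filter (\<lambda>p. fst p N > 0) R))"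
      unfolding set_map by (rule imageI) (use p in simp)
    have m3: "fmc N p q \<in> \<Union> (set ` set (map (\<lambda>p. map (\<lambda>q. fmc N p q) (filter (\<lambda>q. fst q N < 0) R)) (filter (\<lambda>p. fst p N > 0) R)))"
      using m1 m2 by blast
    have "fmc N p q \<in> set (fm N R)" unfolding fm_def set_append set_concat
      using m3 by blast
    then have "ip N (fst (fmc N p q)) z \<le> snd (fmc N p q)" using z unfolding sat_def by blast
    then have "(- fst q N) * ip N (fst p) z + fst p N * ip N (fst q) z \<le> (- fst q N) * snd p + fst p N * snd q"
    proof -
      have "fst (fmc N p q) = (\<lambda>i. (- fst q N) * fst p i + fst p N * fst q i)"
        by (simp add: fmc_def radd_def rscale_def)
      moreover have "snd (fmc N p q) = (- fst q N) * snd p + fst p N * snd q"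
        by (simp add: fmc_def radd_def rscale_def)
      ultimately show ?thesis using \<open>ip N (fst (fmc N p q)) z \<le> snd (fmc N p q)\<close>
        by (simp only: ip_lin2)
    qed
    then have "fst p N * (ip N (fst q) z - snd q) \<le> (- fst q N) * (snd p - ip N (fst p) z)"
      by (simp add: algebra_simps)
    then have H: "fst p N * (ip N (fst q) z - snd q) \<le> (- fst q N) * (snd p - ip N (fst p) z)" .
    have a0: "fst p N \<noteq> 0" and b0: "- fst q N \<noteq> 0"
      using p q by auto
    have ab: "0 \<le> fst p N * (- fst q N)"
      using mult_pos_pos[of "fst p N" "- fst q N"] p(2) q(2) by linarith
    have "lo q = (fst p N * (ip N (fst q) z - snd q)) / (fst p N * (- fst q N))"
      unfolding lo_def using a0 by simp
    also have "\<dots> \<le> ((- fst q N) * (snd p - ip N (fst p) z)) / (fst p N * (- fst q N))"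
      by (rule divide_right_mono[OF H ab])
    also have "\<dots> = up p" unfolding up_def using b0 by simp
    finally show ?thesis using p q by simp
  qed
  define s where "s = (if L \<noteq> {} then Max L else if U \<noteq> {} then Min U else 0)"
  have ipz: "ip N a (z(N := s)) = ip N a z" for a by (rule ip_cong) auto
  have "sat (Suc N) R (z(N := s))" unfolding sat_def
  proof
    fix r assume r: "r \<in> set R"
    have e: "ip (Suc N) (fst r) (z(N := s)) = ip N (fst r) z + fst r N * s"
      by (simp add: ip_Suc ipz)
    consider "fst r N = 0" | "fst r N > 0" | "fst r N < 0" by linarith
    then show "ip (Suc N) (fst r) (z(N := s)) \<le> snd r"
    proof cases
      case 1
      then have "r \<in> set (fm N R)" using r unfolding fm_def set_append set_filter by blast
      then have "ip N (fst r) z \<le> snd r" using z unfolding sat_def by blast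
      then show ?thesis using 1 e by simp
    next
      case 2
      then have uU: "up r \<in> U" using r unfolding U_def pos_def set_filter by blast
      have "s \<le> up r"
      proof (cases "L = {}")
        case True
        then show ?thesis using uU finU by (auto simp: s_def)
      next
        case False
        then have "Max L \<in> L" using finL by simp
        then show ?thesis using LU uU False by (simp add: s_def)
      qed
      then have "s * fst r N \<le> snd r - ip N (fst r) z" using 2 by (simp add: up_def pos_le_divide_eq)
      then show ?thesis using e by (simp add: mult.commute)
    next
      case 3
      then have lL: "lo r \<in> L" using r unfolding L_def neg_def set_filter by blast
      then have "lo r \<le> s" using finL Max_ge[OF finL lL] by (auto simp: s_def)
      then have "ip N (fst r) z - snd r \<le> s * (- fst r N)" using 3 pos_divide_le_eq[of "- fst r N" "ip N (fst r) z - snd r" s] \<open>lo r \<le> s\<close> unfolding lo_def by simp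
      then show ?thesis using e by (simp add: algebra_simps)
    qed
  qed
  then show ?thesis by blast
qed

theorem farkas: "\<not> (\<exists>z. sat N R z) \<Longrightarrow> \<exists>e\<in>rcone R. (\<forall>i<N. fst e i = 0) \<and> snd e < 0"
proof (induction N arbitrary: R)
  case 0
  then obtain z where "\<not> sat 0 R z" by blast
  then obtain r where "r \<in> set R" "snd r < 0" by (auto simp: sat_def not_le)
  then show ?case by (auto intro: rcone.gen)
next
  case (Suc N)
  have "\<not> (\<exists>z. sat N (fm N R) z)" using fm_complete Suc.prems by blast
  then obtain e where e: "e \<in> rcone (fm N R)" "\<forall>i<N. fst e i = 0" "snd e < 0" using Suc.IH by blast
  have "fst e N = 0" using rcone_coord0[OF e(1)] fm_zero by blast
  moreover have "e \<in> rcone R" using rcone_mono[OF e(1) fm_cone] .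
  ultimately show ?case using e by (auto simp: less_Suc_eq)
qed

fun fmi :: "nat \<Rightarrow> nat \<Rightarrow> row list \<Rightarrow> row list" where
  "fmi N 0 R = R"
| "fmi N (Suc j) R = fmi N j (fm (N + j) R)"

lemma fmi_proj: "sat N (fmi N j R) z \<longleftrightarrow> (\<exists>v. (\<forall>i<N. v i = z i) \<and> sat (N + j) R v)"
proof (induction j arbitrary: R)
  case 0
  show ?case
  proof
    assume "sat N (fmi N 0 R) z"
    then show "\<exists>v. (\<forall>i<N. v i = z i) \<and> sat (N + 0) R v" by auto
  next
    assume "\<exists>v. (\<forall>i<N. v i = z i) \<and> sat (N + 0) R v"
    then obtain v where v: "\<forall>i<N. v i = z i" "sat N R v" by auto
    have "sat N R v = sat N R z" by (rule sat_cong) (use v(1) in auto)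
    then show "sat N (fmi N 0 R) z" using v(2) by simp
  qed
next
  case (Suc j)
  have "sat N (fmi N (Suc j) R) z \<longleftrightarrow> (\<exists>v. (\<forall>i<N. v i = z i) \<and> sat (N + j) (fm (N + j) R) v)"
    using Suc.IH by simp
  also have "\<dots> \<longleftrightarrow> (\<exists>v. (\<forall>i<N. v i = z i) \<and> sat (N + Suc j) R v)"
  proof
    assume "\<exists>v. (\<forall>i<N. v i = z i) \<and> sat (N + j) (fm (N + j) R) v"
    then obtain v where v: "\<forall>i<N. v i = z i" "sat (N + j) (fm (N + j) R) v" by blast
    obtain s where "sat (Suc (N + j)) R (v(N + j := s))" using fm_complete[OF v(2)] by blast
    moreover have "\<forall>i<N. (v(N + j := s)) i = z i" using v(1) by auto
    ultimately show "\<exists>v. (\<forall>i<N. v i = z i) \<and> sat (N + Suc j) R v" by (metis add_Suc_right)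
  next
    assume "\<exists>v. (\<forall>i<N. v i = z i) \<and> sat (N + Suc j) R v"
    then show "\<exists>v. (\<forall>i<N. v i = z i) \<and> sat (N + j) (fm (N + j) R) v"
      using fm_sound by (metis add_Suc_right)
  qed
  finally show ?case .
qed

lemma radd_zero[simp]: "radd r rzero = r" "radd rzero r = r"
  by (simp_all add: radd_def rzero_def)

lemma rcone_append:
  "e \<in> rcone (L1 @ L2) \<Longrightarrow> \<exists>e1\<in>rcone L1. \<exists>e2\<in>rcone L2. e = radd e1 e2"
proof (induction rule: rcone.induct)
  case zero
  then show ?case by (metis radd_zero(1) rcone.zero)
next
  case (gen r)
  then show ?case by (metis Un_iff radd_zero rcone.gen rcone.zero set_append)
next
  case (add r s)
  then obtain a1 a2 b1 b2 where "a1 \<in> rcone L1" "a2 \<in> rcone L2" "r = radd a1 a2"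
    "b1 \<in> rcone L1" "b2 \<in> rcone L2" "s = radd b1 b2" by blast
  moreover have "radd (radd a1 a2) (radd b1 b2) = radd (radd a1 b1) (radd a2 b2)"
    by (simp add: radd_def algebra_simps)
  ultimately show ?case by (metis rcone.add)
next
  case (scale r c)
  then obtain a1 a2 where "a1 \<in> rcone L1" "a2 \<in> rcone L2" "r = radd a1 a2" by blast
  moreover have "rscale c (radd a1 a2) = radd (rscale c a1) (rscale c a2)"
    by (simp add: radd_def rscale_def algebra_simps)
  ultimately show ?case using scale.hyps(2) by (metis rcone.scale)
qed

lemma rcone_map:
  assumes "\<And>r s. f (radd r s) = radd (f r) (f s)" "\<And>c r. f (rscale c r) = rscale c (f r)" "f rzero = rzero"
  shows "e \<in> rcone (map f R) \<Longrightarrow> \<exists>e'\<in>rcone R. e = f e'"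
proof (induction rule: rcone.induct)
  case zero then show ?case using assms(3) rcone.zero by metis
next
  case (gen r) then show ?case using rcone.gen by auto
next
  case (add r s) then show ?case using assms(1) rcone.add by metis
next
  case (scale r c) then show ?case using assms(2) rcone.scale by metis
qed

lemma rcone_single: "e \<in> rcone [r] \<Longrightarrow> \<exists>\<mu>\<ge>0. e = rscale \<mu> r"
proof (induction rule: rcone.induct)
  case zero then show ?case by (intro exI[of _ 0]) (simp add: rscale_def rzero_def)
next
  case (gen r) then show ?case by (intro exI[of _ 1]) (simp add: rscale_def)
next
  case (add s t)
  then obtain \<mu>1 \<mu>2 where "\<mu>1 \<ge> 0" "s = rscale \<mu>1 r" "\<mu>2 \<ge> 0" "t = rscale \<mu>2 r" by blast
  then show ?case
    by (intro exI[of _ "\<mu>1 + \<mu>2"]) (simp add: rscale_def radd_def distrib_right)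
next
  case (scale s c)
  then obtain \<mu>1 where "\<mu>1 \<ge> 0" "s = rscale \<mu>1 r" by blast
  then show ?case using scale.hyps(2)
    by (intro exI[of _ "c * \<mu>1"]) (simp add: rscale_def mult.assoc)
qed

lemma sum_delta_mult: "i0 < (k::nat) \<Longrightarrow> (\<Sum>i<k. (if i = i0 then 1 else 0) * g i) = (g i0 :: real)"
proof -
  assume "i0 < k"
  have "(\<Sum>i<k. (if i = i0 then 1 else 0) * g i) = (\<Sum>i<k. if i = i0 then g i0 else 0)"
    by (rule sum.cong) auto
  also have "\<dots> = g i0" using \<open>i0 < k\<close> by (subst sum.delta) auto
  finally show ?thesis .
qed

lemma rcone_upt:
  "e \<in> rcone (map f [0..<k]) \<Longrightarrow> \<exists>u. (\<forall>i. 0 \<le> u i) \<and>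
      e = ((\<lambda>j. \<Sum>i<k. u i * fst (f i) j), (\<Sum>i<k. u i * snd (f i)))"
proof (induction rule: rcone.induct)
  case zero then show ?case by (intro exI[of _ "\<lambda>_. 0"]) (simp add: rzero_def)
next
  case (gen r)
  then obtain i0 where i0: "i0 < k" "r = f i0" by auto
  show ?case
  proof (intro exI[of _ "\<lambda>i. if i = i0 then 1 else 0"] conjI allI)
    show "r = ((\<lambda>j. \<Sum>i<k. (if i = i0 then 1 else 0) * fst (f i) j), \<Sum>i<k. (if i = i0 then 1 else 0) * snd (f i))"
      using i0 by (simp only: sum_delta_mult) simp
  qed simp
next
  case (add r s)
  then obtain u v where "\<forall>i. 0 \<le> u i" "r = ((\<lambda>j. \<Sum>i<k. u i * fst (f i) j), (\<Sum>i<k. u i * snd (f i)))"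
    "\<forall>i. 0 \<le> v i" "s = ((\<lambda>j. \<Sum>i<k. v i * fst (f i) j), (\<Sum>i<k. v i * snd (f i)))" by blast
  then show ?case
    by (intro exI[of _ "\<lambda>i. u i + v i"]) (simp add: radd_def distrib_right sum.distrib)
next
  case (scale r c)
  then obtain u where "\<forall>i. 0 \<le> u i" "r = ((\<lambda>j. \<Sum>i<k. u i * fst (f i) j), (\<Sum>i<k. u i * snd (f i)))" by blast
  then show ?case using scale.hyps(2)
    by (intro exI[of _ "\<lambda>i. c * u i"]) (simp add: rscale_def sum_distrib_left mult.assoc)
qed

theorem affine_farkas:
  assumes z0: "sat N R z0" and val: "\<forall>z. sat N R z \<longrightarrow> ip N a z \<le> \<beta>"
  shows "\<exists>e\<in>rcone R. (\<forall>i<N. fst e i = a i) \<and> snd e \<le> \<beta>"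
proof -
  define h where "h r = ((fst r)(N := - snd r), 0::real)" for r :: row
  define trow :: row where "trow = ((\<lambda>i. if i = N then -1 else 0), 0)"
  define arow :: row where "arow = ((\<lambda>i. - a i)(N := \<beta>), -1)"
  define RH where "RH = map h R @ [trow, arow]"
  have iph: "ip (Suc N) (fst (h r)) w = ip N (fst r) w - snd r * w N" for r w
    by (simp add: h_def ip_Suc, rule ip_cong) auto
  have infeas: "\<not> (\<exists>w. sat (Suc N) RH w)"
  proof
    assume "\<exists>w. sat (Suc N) RH w"
    then obtain w where w: "sat (Suc N) RH w" by blast
    have rows: "ip N (fst r) w \<le> snd r * w N" if "r \<in> set R" for r
    proof -
      have "h r \<in> set RH" using that unfolding RH_def by simp
      then have "ip (Suc N) (fst (h r)) w \<le> snd (h r)" using w unfolding sat_def by blast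
      then show ?thesis using iph[of r w] by (simp add: h_def)
    qed
    have t1: "ip N (fst trow) w = ip N (\<lambda>_. 0) w" by (rule ip_cong) (auto simp: trow_def)
    have t2: "ip (Suc N) (fst trow) w \<le> snd trow" using w by (simp add: RH_def)
    have tau: "0 \<le> w N" using t1 t2 by (simp add: ip_Suc trow_def)
    have a1: "ip N (fst arow) w = ip N (\<lambda>i. - a i) w" by (rule ip_cong) (auto simp: arow_def)
    have a2: "ip N (\<lambda>i. - a i) w = - ip N a w" by (simp add: ip_def sum_negf)
    have ipa: "ip (Suc N) (fst arow) w = - ip N a w + \<beta> * w N"
      using a1 a2 by (simp add: ip_Suc arow_def)
    have a3: "ip (Suc N) (fst arow) w \<le> snd arow" using w by (simp add: RH_def)
    have aw: "\<beta> * w N + 1 \<le> ip N a w" using a3 ipa by (simp add: arow_def)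
    show False
    proof (cases "w N = 0")
      case False
      then have tp: "w N > 0" using tau by simp
      define z where "z i = (1 / w N) * w i" for i
      have "sat N R z" unfolding sat_def
      proof
        fix r assume r: "r \<in> set R"
        have "ip N (fst r) z = (1 / w N) * ip N (fst r) w" unfolding z_def by (rule ip_scale2)
        also have "\<dots> \<le> (1 / w N) * (snd r * w N)" using rows[OF r] tp by (simp add: pos_divide_le_eq)
        also have "\<dots> = snd r" using tp by simp
        finally show "ip N (fst r) z \<le> snd r" .
      qed
      then have "ip N a z \<le> \<beta>" using val by blast
      moreover have "ip N a z = (1 / w N) * ip N a w" unfolding z_def by (rule ip_scale2)
      ultimately have "ip N a w \<le> \<beta> * w N" using tp by (simp add: pos_divide_le_eq)
      then show False using aw by simp
    next
      case True
      define s where "s = max 0 (\<beta> - ip N a z0) + 1"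
      define z where "z i = z0 i + s * w i" for i
      have s0: "0 \<le> s" by (simp add: s_def)
      have "sat N R z" unfolding sat_def
      proof
        fix r assume r: "r \<in> set R"
        have "ip N (fst r) z = ip N (fst r) z0 + s * ip N (fst r) w"
          unfolding z_def by (simp add: ip_add2 ip_scale2)
        moreover have "ip N (fst r) w \<le> 0" using rows[OF r] True by simp
        moreover have "ip N (fst r) z0 \<le> snd r" using z0 r by (auto simp: sat_def)
        ultimately show "ip N (fst r) z \<le> snd r" using s0 by (smt (verit) mult_nonneg_nonpos)
      qed
      then have "ip N a z \<le> \<beta>" using val by blast
      moreover have "ip N a z = ip N a z0 + s * ip N a w"
        unfolding z_def by (simp add: ip_add2 ip_scale2)
      moreover have w1: "1 \<le> ip N a w" using aw True by simp
      moreover have "s * 1 \<le> s * ip N a w" using mult_left_mono[OF w1 s0] .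
      ultimately have "ip N a z0 + s \<le> \<beta>" by simp
      then show False unfolding s_def by simp
    qed
  qed
  obtain e where e: "e \<in> rcone RH" "\<forall>i<Suc N. fst e i = 0" "snd e < 0"
    using farkas[OF infeas] by blast
  obtain e1 e2 where e12: "e1 \<in> rcone (map h R)" "e2 \<in> rcone [trow, arow]" "e = radd e1 e2"
    using rcone_append[of e "map h R" "[trow, arow]"] e(1) unfolding RH_def by blast
  obtain e3 e4 where e34: "e3 \<in> rcone [trow]" "e4 \<in> rcone [arow]" "e2 = radd e3 e4"
    using rcone_append[of e2 "[trow]" "[arow]"] e12(2) by auto
  obtain \<mu> \<nu> where mn: "\<mu> \<ge> 0" "e3 = rscale \<mu> trow" "\<nu> \<ge> 0" "e4 = rscale \<nu> arow"
    using rcone_single e34 by metis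
  obtain e' where e': "e' \<in> rcone R" "e1 = h e'"
  proof -
    have "\<exists>e'\<in>rcone R. e1 = h e'"
      by (rule rcone_map[OF _ _ _ e12(1)]) (auto simp: h_def radd_def rscale_def rzero_def fun_eq_iff)
    then show ?thesis using that by blast
  qed
  have sn: "snd e = - \<nu>" using e12(3) e34(3) mn e'(2)
    by (simp add: radd_def rscale_def h_def trow_def arow_def)
  then have nu: "\<nu> > 0" using e(3) by simp
  have fi: "fst e' i - \<nu> * a i = 0" if "i < N" for i
  proof -
    have "fst e i = 0" using e(2) that by simp
    then show ?thesis using e12(3) e34(3) mn e'(2) that
      by (simp add: radd_def rscale_def h_def trow_def arow_def)
  qed
  have fN: "- snd e' - \<mu> + \<nu> * \<beta> = 0"
  proof -
    have "fst e N = 0" using e(2) by simp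
    then show ?thesis using e12(3) e34(3) mn e'(2)
      by (simp add: radd_def rscale_def h_def trow_def arow_def)
  qed
  show ?thesis
  proof (intro bexI[of _ "rscale (1 / \<nu>) e'"] conjI allI impI)
    show "rscale (1 / \<nu>) e' \<in> rcone R" using e'(1) nu by (intro rcone.scale) auto
    fix i assume "i < N"
    then show "fst (rscale (1 / \<nu>) e') i = a i" using fi[of i] nu by (simp add: rscale_def field_simps)
  next
    show "snd (rscale (1 / \<nu>) e') \<le> \<beta>" using fN nu mn(1)
      by (simp add: rscale_def field_simps)
  qed
qed

lemma sum_split: "(\<Sum>i<(A::nat) + B. f i) = (\<Sum>i<A. f i) + (\<Sum>i<B. (f (A + i)::real))"
  by (induction B) simp_all

lemma ip_sub: "ip N (\<lambda>i. a i - b i) z = ip N a z - ip N b z"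
  by (simp add: ip_def sum_subtractf left_diff_distrib)

definition viol :: "nat \<Rightarrow> row list \<Rightarrow> (nat \<Rightarrow> real) \<Rightarrow> real" where
  "viol N R z = sum_list (map (\<lambda>r. max 0 (ip N (fst r) z - snd r)) R)"

lemma viol_nonneg: "0 \<le> viol N R z"
  unfolding viol_def by (induction R) auto

lemma viol_ge: "r \<in> set R \<Longrightarrow> ip N (fst r) z - snd r \<le> viol N R z"
proof (induction R)
  case Nil then show ?case by simp
next
  case (Cons a R)
  have "0 \<le> viol N R z" by (rule viol_nonneg)
  then show ?case using Cons by (auto simp: viol_def)
qed

lemma rcone_bound: "e \<in> rcone R \<Longrightarrow> \<exists>H\<ge>0. \<forall>z. ip N (fst e) z - snd e \<le> H * viol N R z"
proof (induction rule: rcone.induct)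
  case zero
  then show ?case by (intro exI[of _ 0]) (simp add: rzero_def)
next
  case (gen r)
  then show ?case by (intro exI[of _ 1]) (simp add: viol_ge)
next
  case (add r s)
  then obtain H1 H2 where h: "H1 \<ge> 0" "\<forall>z. ip N (fst r) z - snd r \<le> H1 * viol N R z"
    "H2 \<ge> 0" "\<forall>z. ip N (fst s) z - snd s \<le> H2 * viol N R z" by blast
  show ?case
  proof (intro exI[of _ "H1 + H2"] conjI allI)
    fix z
    have "ip N (fst (radd r s)) z - snd (radd r s) = (ip N (fst r) z - snd r) + (ip N (fst s) z - snd s)"
      by (simp add: radd_def ip_add)
    also have "\<dots> \<le> H1 * viol N R z + H2 * viol N R z" using h by (meson add_mono)
    finally show "ip N (fst (radd r s)) z - snd (radd r s) \<le> (H1 + H2) * viol N R z"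
      by (simp add: distrib_right)
  qed (use h in simp)
next
  case (scale r c)
  then obtain H where h: "H \<ge> 0" "\<forall>z. ip N (fst r) z - snd r \<le> H * viol N R z" by blast
  show ?case
  proof (intro exI[of _ "c * H"] conjI allI)
    fix z
    have "ip N (fst (rscale c r)) z - snd (rscale c r) = c * (ip N (fst r) z - snd r)"
      by (simp add: rscale_def ip_scale right_diff_distrib)
    also have "\<dots> \<le> c * (H * viol N R z)" using h scale.hyps(2) by (simp add: mult_left_mono)
    finally show "ip N (fst (rscale c r)) z - snd (rscale c r) \<le> c * H * viol N R z"
      by (simp add: mult.assoc)
  qed (use h scale.hyps(2) in simp)
qed

lemma combine_H:
  assumes "\<forall>r\<in>set L. \<exists>H\<ge>0. \<forall>z T. H * V z \<le> T \<longrightarrow> P r z T" and "\<forall>z. 0 \<le> (V z::real)"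
  shows "\<exists>H\<ge>0. \<forall>z T. H * V z \<le> T \<longrightarrow> (\<forall>r\<in>set L. P r z T)"
  using assms(1)
proof (induction L)
  case Nil
  then show ?case by (intro exI[of _ 0]) simp
next
  case (Cons a L)
  then obtain H1 where h1: "H1 \<ge> 0" "\<forall>z T. H1 * V z \<le> T \<longrightarrow> P a z T" by auto
  from Cons obtain H2 where h2: "H2 \<ge> 0" "\<forall>z T. H2 * V z \<le> T \<longrightarrow> (\<forall>r\<in>set L. P r z T)" by auto
  show ?case
  proof (intro exI[of _ "H1 + H2"] conjI allI impI)
    fix z T assume T: "(H1 + H2) * V z \<le> T"
    have v: "0 \<le> V z" using assms(2) by blast
    have "H1 * V z \<le> T" using T h2(1) v by (smt (verit) distrib_right mult_nonneg_nonneg)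
    moreover have "H2 * V z \<le> T" using T h1(1) v by (smt (verit) distrib_right mult_nonneg_nonneg)
    ultimately show "\<forall>r\<in>set (a # L). P r z T" using h1 h2 by auto
  qed (use h1 h2 in simp)
qed

theorem hoffman:
  assumes z0: "sat K R z0"
  shows "\<exists>H\<ge>0. \<forall>z. \<exists>p. sat K R p \<and> (\<forall>i<K. \<bar>z i - p i\<bar> \<le> H * viol K R z)"
proof -
  define shr where "shr r = ((\<lambda>i. if Suc K \<le> i then fst r (i - Suc K) else 0), snd r)" for r :: row
  define ra :: "nat \<Rightarrow> row" where "ra i = ((\<lambda>j. ((if j = i then 1 else 0) - (if j = K then 1 else 0)) - (if j = Suc K + i then 1 else 0)), 0::real)" for i
  define rb :: "nat \<Rightarrow> row" where "rb i = ((\<lambda>j. ((if j = Suc K + i then 1 else 0) - (if j = K then 1 else 0)) - (if j = i then 1 else 0)), 0::real)" for i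
  define S where "S = map shr R @ map ra [0..<K] @ map rb [0..<K]"
  define R' where "R' = fmi (Suc K) K S"
  define Q where "Q w \<longleftrightarrow> (\<exists>p. sat K R p \<and> (\<forall>i<K. \<bar>w i - p i\<bar> \<le> w K))" for w
  have ipsh: "ip (Suc K + K) (fst (shr r)) v = ip K (fst r) (\<lambda>i. v (Suc K + i))" for r v
  proof -
    have "ip (Suc K + K) (fst (shr r)) v = (\<Sum>i<Suc K. fst (shr r) i * v i) + (\<Sum>i<K. fst (shr r) (Suc K + i) * v (Suc K + i))"
      unfolding ip_def by (rule sum_split)
    also have "(\<Sum>i<Suc K. fst (shr r) i * v i) = 0" by (rule sum.neutral) (simp add: shr_def)
    also have "(\<Sum>i<K. fst (shr r) (Suc K + i) * v (Suc K + i)) = ip K (fst r) (\<lambda>i. v (Suc K + i))"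
      unfolding ip_def shr_def by simp
    finally show ?thesis by simp
  qed
  have ipa: "ip (Suc K + K) (fst (ra i)) v = v i - v K - v (Suc K + i)" if "i < K" for i v
    using that unfolding ra_def by (simp add: ip_sub ip_delta1)
  have ipb: "ip (Suc K + K) (fst (rb i)) v = v (Suc K + i) - v K - v i" if "i < K" for i v
    using that unfolding rb_def by (simp add: ip_sub ip_delta1)
  have satS: "sat (Suc K + K) S v \<longleftrightarrow> sat K R (\<lambda>i. v (Suc K + i)) \<and> (\<forall>i<K. \<bar>v i - v (Suc K + i)\<bar> \<le> v K)" for v
  proof -
    have "sat (Suc K + K) (map shr R) v \<longleftrightarrow> sat K R (\<lambda>i. v (Suc K + i))"
      unfolding sat_def using ipsh by (simp add: shr_def)
    moreover have "sat (Suc K + K) (map ra [0..<K] @ map rb [0..<K]) v \<longleftrightarrow> (\<forall>i<K. \<bar>v i - v (Suc K + i)\<bar> \<le> v K)"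
      using ipa ipb by (auto simp: ra_def rb_def abs_le_iff)
    ultimately show ?thesis unfolding S_def by simp
  qed
  have R'Q: "sat (Suc K) R' w \<longleftrightarrow> Q w" for w
  proof
    assume "sat (Suc K) R' w"
    then obtain v where v: "\<forall>i<Suc K. v i = w i" "sat (Suc K + K) S v" unfolding R'_def fmi_proj by blast
    then have "sat K R (\<lambda>i. v (Suc K + i))" "\<forall>i<K. \<bar>v i - v (Suc K + i)\<bar> \<le> v K" using satS by auto
    then show "Q w" unfolding Q_def using v(1) by (intro exI[of _ "\<lambda>i. v (Suc K + i)"]) auto
  next
    assume "Q w"
    then obtain p where p: "sat K R p" "\<forall>i<K. \<bar>w i - p i\<bar> \<le> w K" unfolding Q_def by blast
    define v where "v i = (if i < Suc K then w i else p (i - Suc K))" for i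
    have "(\<lambda>i. v (Suc K + i)) = p" by (auto simp: v_def)
    then have "sat (Suc K + K) S v" using satS p by (auto simp: v_def)
    moreover have "\<forall>i<Suc K. v i = w i" by (simp add: v_def)
    ultimately show "sat (Suc K) R' w" unfolding R'_def fmi_proj by blast
  qed
  have valid: "ip (Suc K) (fst r) w \<le> snd r" if "r \<in> set R'" "Q w" for r w
    using that R'Q unfolding sat_def by blast
  have ipT: "ip (Suc K) a (z(K := T)) = ip K a z + a K * T" for a z T
  proof -
    have "ip K a (z(K := T)) = ip K a z" by (rule ip_cong) auto
    then show ?thesis by (simp add: ip_Suc)
  qed
  have rowH: "\<exists>H\<ge>0. \<forall>z T. H * viol K R z \<le> T \<longrightarrow> ip (Suc K) (fst r) (z(K := T)) \<le> snd r"
    if r: "r \<in> set R'" for r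
  proof -
    define g where "g = fst r K"
    have g0: "g \<le> 0"
    proof (rule ccontr)
      assume "\<not> g \<le> 0"
      then have gp: "g > 0" by simp
      define T0 where "T0 = max 0 ((snd r - ip K (fst r) z0) / g) + 1"
      have "Q (z0(K := T0))" unfolding Q_def
        by (intro exI[of _ z0]) (auto simp: z0 T0_def)
      then have "ip K (fst r) z0 + g * T0 \<le> snd r" using valid[OF r, of "z0(K := T0)"] ipT[of "fst r" z0 T0] by (simp add: g_def)
      moreover have "(snd r - ip K (fst r) z0) / g < T0" by (simp add: T0_def)
      then have "snd r - ip K (fst r) z0 < T0 * g" using gp by (simp add: pos_divide_less_eq)
      ultimately show False by (simp add: mult.commute)
    qed
    show ?thesis
    proof (cases "g = 0")
      case True
      have "ip K (fst r) z \<le> snd r" for z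
      proof -
        define T1 where "T1 = (\<Sum>i<K. \<bar>z i - z0 i\<bar>)"
        have "\<bar>z i - z0 i\<bar> \<le> T1" if "i < K" for i
          unfolding T1_def using that by (intro member_le_sum) auto
        then have "Q (z(K := T1))" unfolding Q_def by (intro exI[of _ z0]) (auto simp: z0)
        then show ?thesis using valid[OF r, of "z(K := T1)"] ipT[of "fst r" z T1] True by (simp add: g_def)
      qed
      then show ?thesis using True ipT by (intro exI[of _ 0]) (simp add: g_def)
    next
      case False
      then have gn: "g < 0" using g0 by simp
      have "\<forall>z. sat K R z \<longrightarrow> ip K (fst r) z \<le> snd r"
      proof (intro allI impI)
        fix z assume "sat K R z"
        then have "Q (z(K := 0))" unfolding Q_def by (intro exI[of _ z]) auto
        then show "ip K (fst r) z \<le> snd r" using valid[OF r, of "z(K := 0)"] ipT[of "fst r" z 0] by simp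
      qed
      from affine_farkas[OF z0 this] obtain e where e: "e \<in> rcone R" "\<forall>i<K. fst e i = fst r i" "snd e \<le> snd r"
        by blast
      obtain H' where H': "H' \<ge> 0" "\<forall>z. ip K (fst e) z - snd e \<le> H' * viol K R z"
        using rcone_bound[OF e(1)] by blast
      have eq: "ip K (fst e) z = ip K (fst r) z" for z by (rule ip_cong) (use e(2) in auto)
      show ?thesis
      proof (intro exI[of _ "H' / (- g)"] conjI allI impI)
        show "0 \<le> H' / (- g)" using divide_nonneg_pos[OF H'(1), of "- g"] gn by linarith
        fix z T assume T: "H' / (- g) * viol K R z \<le> T"
        have m: "(- g) * (H' / (- g) * viol K R z) \<le> (- g) * T"
          by (rule mult_left_mono[OF T]) (use gn in simp)
        have "(- g) * (H' / (- g) * viol K R z) = H' * viol K R z" using gn by simp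
        then have "H' * viol K R z \<le> - g * T" using m by linarith
        moreover have "ip K (fst r) z - snd r \<le> H' * viol K R z" using H'(2) e(3) eq[of z] by smt
        ultimately show "ip (Suc K) (fst r) (z(K := T)) \<le> snd r" using ipT by (simp add: g_def)
      qed
    qed
  qed
  obtain H where H: "H \<ge> 0" "\<forall>z T. H * viol K R z \<le> T \<longrightarrow> (\<forall>r\<in>set R'. ip (Suc K) (fst r) (z(K := T)) \<le> snd r)"
    using combine_H[of R' "viol K R" "\<lambda>r z T. ip (Suc K) (fst r) (z(K := T)) \<le> snd r"] rowH viol_nonneg
    by blast
  show ?thesis
  proof (intro exI[of _ H] conjI allI)
    fix z
    have "sat (Suc K) R' (z(K := H * viol K R z))" using H(2) unfolding sat_def by blast
    then have "Q (z(K := H * viol K R z))" using R'Q by blast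
    then show "\<exists>p. sat K R p \<and> (\<forall>i<K. \<bar>z i - p i\<bar> \<le> H * viol K R z)" unfolding Q_def by auto
  qed (use H in simp)
qed

lemma ip_swap: "ip n (tmulv m n A y) x = ip m (mulv m n A x) y"
proof -
  have "ip n (tmulv m n A y) x = (\<Sum>j<n. (\<Sum>i<m. A i j * y i) * x j)"
    unfolding ip_def tmulv_def by (rule sum.cong) auto
  also have "\<dots> = (\<Sum>j<n. \<Sum>i<m. A i j * y i * x j)" by (simp add: sum_distrib_right)
  also have "\<dots> = (\<Sum>i<m. \<Sum>j<n. A i j * y i * x j)" by (rule sum.swap)
  also have "\<dots> = (\<Sum>i<m. (\<Sum>j<n. A i j * x j) * y i)"
    by (rule sum.cong) (simp_all add: sum_distrib_left sum_distrib_right algebra_simps)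
  also have "\<dots> = ip m (mulv m n A x) y"
    unfolding ip_def mulv_def by (rule sum.cong) auto
  finally show ?thesis .
qed

lemma gap_identity:
  "ip n c x + ip m b y = ip n (\<lambda>j. tmulv m n A y j + c j) x + ip m (\<lambda>i. b i - mulv m n A x i) y"
  by (simp add: ip_add ip_sub ip_swap)

lemma ip_zero_coef: "(\<And>i. i < N \<Longrightarrow> a i = 0) \<Longrightarrow> ip N a z = 0"
proof -
  assume "\<And>i. i < N \<Longrightarrow> a i = 0"
  then have "ip N a z = ip N (\<lambda>_. 0) z" by (intro ip_cong) auto
  then show ?thesis by simp
qed

lemma ncone_D:
  assumes w: "w \<in> ncone N (nonneg_first N k) x" and kN: "k \<le> N"
  shows "x \<in> nonneg_first N k" "w \<in> vecs N" "\<forall>i<k. w i \<le> 0"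
    "\<forall>i. k \<le> i \<and> i < N \<longrightarrow> w i = 0" "ip N w x = 0"
proof -
  have xin: "x \<in> nonneg_first N k" using w unfolding ncone_def by (auto split: if_splits)
  have wv: "w \<in> vecs N" and test: "\<And>z. z \<in> nonneg_first N k \<Longrightarrow> ip N w (\<lambda>i. z i - x i) \<le> 0"
    using w xin unfolding ncone_def by auto
  show "x \<in> nonneg_first N k" "w \<in> vecs N" by (fact xin, fact wv)
  have xv: "x \<in> vecs N" and xnn: "\<forall>i<k. 0 \<le> x i" using xin by (auto simp: nonneg_first_def)
  have shift: "ip N w (\<lambda>j. (x j + (if j = i then d else 0)) - x j) = w i * d" if "i < N" for i d
    using ip_delta[OF that, of w d] by simp
  have up: "w i \<le> 0" if "i < N" for i
  proof -
    have "(\<lambda>j. x j + (if j = i then 1 else 0)) \<in> nonneg_first N k"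
      using xv xnn that by (auto simp: nonneg_first_def vecs_def)
    from test[OF this] show ?thesis using shift[OF that, of 1] by simp
  qed
  show "\<forall>i<k. w i \<le> 0" using up kN by auto
  show "\<forall>i. k \<le> i \<and> i < N \<longrightarrow> w i = 0"
  proof (intro allI impI)
    fix i assume i: "k \<le> i \<and> i < N"
    have "(\<lambda>j. x j + (if j = i then -1 else 0)) \<in> nonneg_first N k"
      using xv xnn i by (auto simp: nonneg_first_def vecs_def)
    from test[OF this] have "- w i \<le> 0" using shift[of i "-1"] i by simp
    then show "w i = 0" using up[of i] i by simp
  qed
  have z0: "(\<lambda>_. 0) \<in> nonneg_first N k" by (simp add: nonneg_first_def vecs_def)
  have "ip N w (\<lambda>i. 0 - x i) = - ip N w x" by (simp add: ip_def sum_negf)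
  then have g1: "0 \<le> ip N w x" using test[OF z0] by simp
  have "(\<lambda>i. 2 * x i) \<in> nonneg_first N k" using xv xnn by (auto simp: nonneg_first_def vecs_def)
  moreover have "ip N w (\<lambda>i. 2 * x i - x i) = ip N w x" by simp
  ultimately have "ip N w x \<le> 0" using test by fastforce
  then show "ip N w x = 0" using g1 by simp
qed

lemma ncone_I:
  assumes "x \<in> nonneg_first N k" "w \<in> vecs N" "\<forall>i<k. w i \<le> 0" "\<forall>i. k \<le> i \<and> i < N \<longrightarrow> w i = 0"
    "ip N w x = 0"
  shows "w \<in> ncone N (nonneg_first N k) x"
proof -
  have "ip N w (\<lambda>i. z i - x i) \<le> 0" if z: "z \<in> nonneg_first N k" for z
  proof -
    have "ip N w z \<le> 0" unfolding ip_def
    proof (rule sum_nonpos)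
      fix i assume "i \<in> {..<N}"
      then show "w i * z i \<le> 0" using assms(3,4) z
        by (cases "i < k") (auto simp: nonneg_first_def mult_nonpos_nonneg)
    qed
    then show ?thesis using assms(5) by (simp add: ip_diff2)
  qed
  then show ?thesis using assms unfolding ncone_def by auto
qed

locale lpctx =
  fixes n m mI nb :: nat and A :: "nat \<Rightarrow> nat \<Rightarrow> real" and b c :: "nat \<Rightarrow> real"
  assumes nbn: "nb \<le> n" and mIm: "mI \<le> m" and cv: "c \<in> vecs n" and bv: "b \<in> vecs m"
begin

definition pack :: "(nat \<Rightarrow> real) \<Rightarrow> (nat \<Rightarrow> real) \<Rightarrow> (nat \<Rightarrow> real)" where
  "pack x y = (\<lambda>i. if i < n then x i else y (i - n))"

definition gaprow :: row where "gaprow = ((\<lambda>k. if k < n then c k else b (k - n)), 0)"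
definition ngaprow :: row where "ngaprow = ((\<lambda>k. if k < n then - c k else - b (k - n)), 0)"
definition sxr :: "nat \<Rightarrow> row" where "sxr j = ((\<lambda>k. if k = j then -1 else 0), 0)"
definition syr :: "nat \<Rightarrow> row" where "syr i = ((\<lambda>k. if k = n + i then -1 else 0), 0)"
definition d1r :: "nat \<Rightarrow> row" where "d1r j = ((\<lambda>k. if n \<le> k then - A (k - n) j else 0), c j)"
definition d2r :: "nat \<Rightarrow> row" where
  "d2r j = ((\<lambda>k. if j < nb then 0 else if n \<le> k then A (k - n) j else 0), if j < nb then 0 else - c j)"
definition p1r :: "nat \<Rightarrow> row" where "p1r i = ((\<lambda>k. if k < n then A i k else 0), b i)"
definition p2r :: "nat \<Rightarrow> row" where
  "p2r i = ((\<lambda>k. if i < mI then 0 else if k < n then - A i k else 0), if i < mI then 0 else - b i)"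
definition ROm :: "row list" where
  "ROm = [gaprow, ngaprow] @ map sxr [0..<nb] @ map syr [0..<mI] @ map d1r [0..<n] @ map d2r [0..<n]
     @ map p1r [0..<m] @ map p2r [0..<m]"

definition lin_ok where
  "lin_ok x y \<longleftrightarrow> (\<forall>j<nb. 0 \<le> x j) \<and> (\<forall>i<mI. 0 \<le> y i) \<and> ip n c x + ip m b y = 0 \<and>
     (\<forall>j<n. 0 \<le> tmulv m n A y j + c j) \<and> (\<forall>j. nb \<le> j \<and> j < n \<longrightarrow> tmulv m n A y j + c j = 0) \<and>
     (\<forall>i<m. mulv m n A x i \<le> b i) \<and> (\<forall>i. mI \<le> i \<and> i < m \<longrightarrow> mulv m n A x i = b i)"

lemma ip_pack: "ip (n + m) a (pack x y) = ip n a x + ip m (\<lambda>i. a (n + i)) y"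
proof -
  have "ip (n + m) a (pack x y) = (\<Sum>i<n. a i * pack x y i) + (\<Sum>i<m. a (n + i) * pack x y (n + i))"
    unfolding ip_def by (rule sum_split)
  also have "(\<Sum>i<n. a i * pack x y i) = ip n a x" unfolding ip_def pack_def by (rule sum.cong) auto
  also have "(\<Sum>i<m. a (n + i) * pack x y (n + i)) = ip m (\<lambda>i. a (n + i)) y"
    unfolding ip_def pack_def by simp
  finally show ?thesis .
qed

lemma ip_neg: "ip N (\<lambda>i. - a i) z = - ip N a z"
  by (simp add: ip_def sum_negf)

lemma ev_gap: "ip (n + m) (fst gaprow) (pack x y) = ip n c x + ip m b y"
proof -
  have "ip n (fst gaprow) x = ip n c x" by (rule ip_cong) (auto simp: gaprow_def)
  moreover have "(\<lambda>i. fst gaprow (n + i)) = b" by (auto simp: gaprow_def)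
  ultimately show ?thesis by (simp add: ip_pack)
qed

lemma ev_ngap: "ip (n + m) (fst ngaprow) (pack x y) = - (ip n c x + ip m b y)"
proof -
  have "ip n (fst ngaprow) x = ip n (\<lambda>i. - c i) x" by (rule ip_cong) (auto simp: ngaprow_def)
  moreover have "(\<lambda>i. fst ngaprow (n + i)) = (\<lambda>i. - b i)" by (auto simp: ngaprow_def)
  ultimately show ?thesis by (simp add: ip_pack ip_neg)
qed

lemma ev_sx: "j < n \<Longrightarrow> ip (n + m) (fst (sxr j)) (pack x y) = - x j"
proof -
  assume j: "j < n"
  have "ip m (\<lambda>i. fst (sxr j) (n + i)) y = 0" by (rule ip_zero_coef) (use j in \<open>auto simp: sxr_def\<close>)
  moreover have "ip n (fst (sxr j)) x = - x j" unfolding sxr_def using ip_delta1[OF j, of "-1" x] by simp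
  ultimately show ?thesis by (simp add: ip_pack)
qed

lemma ev_sy: "i < m \<Longrightarrow> ip (n + m) (fst (syr i)) (pack x y) = - y i"
proof -
  assume i: "i < m"
  have "ip n (fst (syr i)) x = 0" by (rule ip_zero_coef) (auto simp: syr_def)
  moreover have "(\<lambda>k. fst (syr i) (n + k)) = (\<lambda>k. if k = i then -1 else 0)" by (auto simp: syr_def)
  ultimately show ?thesis using ip_delta1[OF i, of "-1" y] by (simp add: ip_pack)
qed

lemma tm_ip: "j < n \<Longrightarrow> ip m (\<lambda>i. A i j) y = tmulv m n A y j"
  by (simp add: ip_def tmulv_def)
lemma m_ip: "i < m \<Longrightarrow> ip n (\<lambda>k. A i k) x = mulv m n A x i"
  by (simp add: ip_def mulv_def)

lemma ev_d1: "j < n \<Longrightarrow> ip (n + m) (fst (d1r j)) (pack x y) = - tmulv m n A y j"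
proof -
  assume j: "j < n"
  have "ip n (fst (d1r j)) x = 0" by (rule ip_zero_coef) (auto simp: d1r_def)
  moreover have "(\<lambda>k. fst (d1r j) (n + k)) = (\<lambda>i. - A i j)" by (auto simp: d1r_def)
  ultimately show ?thesis using tm_ip[OF j] by (simp add: ip_pack ip_neg)
qed

lemma ev_d2: "j < n \<Longrightarrow> ip (n + m) (fst (d2r j)) (pack x y) = (if j < nb then 0 else tmulv m n A y j)"
proof -
  assume j: "j < n"
  have "ip n (fst (d2r j)) x = 0" by (rule ip_zero_coef) (auto simp: d2r_def)
  moreover have "(\<lambda>k. fst (d2r j) (n + k)) = (\<lambda>i. if j < nb then 0 else A i j)" by (auto simp: d2r_def)
  ultimately show ?thesis using tm_ip[OF j] by (simp add: ip_pack)
qed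

lemma ev_p1: "i < m \<Longrightarrow> ip (n + m) (fst (p1r i)) (pack x y) = mulv m n A x i"
proof -
  assume i: "i < m"
  have "ip m (\<lambda>k. fst (p1r i) (n + k)) y = 0" by (rule ip_zero_coef) (auto simp: p1r_def)
  moreover have "ip n (fst (p1r i)) x = ip n (\<lambda>k. A i k) x" by (rule ip_cong) (auto simp: p1r_def)
  ultimately show ?thesis using m_ip[OF i] by (simp add: ip_pack)
qed

lemma ev_p2: "i < m \<Longrightarrow> ip (n + m) (fst (p2r i)) (pack x y) = (if i < mI then 0 else - mulv m n A x i)"
proof -
  assume i: "i < m"
  have "ip m (\<lambda>k. fst (p2r i) (n + k)) y = 0" by (rule ip_zero_coef) (auto simp: p2r_def)
  moreover have "ip n (fst (p2r i)) x = ip n (\<lambda>k. if i < mI then 0 else - A i k) x"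
    by (rule ip_cong) (auto simp: p2r_def)
  moreover have "ip n (\<lambda>k. if i < mI then 0 else - A i k) x = (if i < mI then 0 else - mulv m n A x i)"
    using m_ip[OF i] by (simp add: ip_neg)
  ultimately show ?thesis by (simp add: ip_pack)
qed

lemma snd_rows: "snd gaprow = 0" "snd ngaprow = 0" "snd (sxr j) = 0" "snd (syr i) = 0"
  "snd (d1r j) = c j" "snd (d2r j) = (if j < nb then 0 else - c j)" "snd (p1r i) = b i"
  "snd (p2r i) = (if i < mI then 0 else - b i)"
  by (simp_all add: gaprow_def ngaprow_def sxr_def syr_def d1r_def d2r_def p1r_def p2r_def)

lemma sat_ROm: "sat (n + m) ROm (pack x y) \<longleftrightarrow> lin_ok x y"
proof -
  have s1: "(\<forall>j<nb. ip (n + m) (fst (sxr j)) (pack x y) \<le> snd (sxr j)) \<longleftrightarrow> (\<forall>j<nb. 0 \<le> x j)"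
    using ev_sx nbn by (auto simp: snd_rows)
  have s2: "(\<forall>i<mI. ip (n + m) (fst (syr i)) (pack x y) \<le> snd (syr i)) \<longleftrightarrow> (\<forall>i<mI. 0 \<le> y i)"
    using ev_sy mIm by (auto simp: snd_rows)
  have s3: "(\<forall>j<n. ip (n + m) (fst (d1r j)) (pack x y) \<le> snd (d1r j)) \<longleftrightarrow> (\<forall>j<n. 0 \<le> tmulv m n A y j + c j)"
    using ev_d1 by (auto simp: snd_rows)
  have s4: "(\<forall>j<n. ip (n + m) (fst (d2r j)) (pack x y) \<le> snd (d2r j)) \<longleftrightarrow> (\<forall>j<n. nb \<le> j \<longrightarrow> tmulv m n A y j + c j \<le> 0)"
    using ev_d2 by (auto simp: snd_rows not_less)
  have s5: "(\<forall>i<m. ip (n + m) (fst (p1r i)) (pack x y) \<le> snd (p1r i)) \<longleftrightarrow> (\<forall>i<m. mulv m n A x i \<le> b i)"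
    using ev_p1 by (auto simp: snd_rows)
  have s6: "(\<forall>i<m. ip (n + m) (fst (p2r i)) (pack x y) \<le> snd (p2r i)) \<longleftrightarrow> (\<forall>i<m. mI \<le> i \<longrightarrow> b i \<le> mulv m n A x i)"
    using ev_p2 by (auto simp: snd_rows not_less)
  have s0: "sat (n + m) [gaprow, ngaprow] (pack x y) \<longleftrightarrow> ip n c x + ip m b y = 0"
    using ev_gap ev_ngap by (auto simp: snd_rows)
  have "sat (n + m) ROm (pack x y) \<longleftrightarrow> ip n c x + ip m b y = 0 \<and> (\<forall>j<nb. 0 \<le> x j) \<and> (\<forall>i<mI. 0 \<le> y i)
     \<and> (\<forall>j<n. 0 \<le> tmulv m n A y j + c j) \<and> (\<forall>j<n. nb \<le> j \<longrightarrow> tmulv m n A y j + c j \<le> 0)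
     \<and> (\<forall>i<m. mulv m n A x i \<le> b i) \<and> (\<forall>i<m. mI \<le> i \<longrightarrow> b i \<le> mulv m n A x i)"
    unfolding ROm_def sat_append sat_map_upt s0 s1 s2 s3 s4 s5 s6 ..
  also have "\<dots> \<longleftrightarrow> lin_ok x y" unfolding lin_ok_def
    by (auto intro: antisym)
  finally show ?thesis .
qed

end

context lpctx
begin

lemma compl_parts:
  assumes "lin_ok x y"
  shows "ip n (\<lambda>j. tmulv m n A y j + c j) x = 0" "ip m (\<lambda>i. b i - mulv m n A x i) y = 0"
proof -
  have P: "0 \<le> ip n (\<lambda>j. tmulv m n A y j + c j) x" unfolding ip_def
  proof (rule sum_nonneg)
    fix j assume "j \<in> {..<n}"
    then show "0 \<le> (tmulv m n A y j + c j) * x j" using assms unfolding lin_ok_def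
      by (cases "j < nb") auto
  qed
  have D: "0 \<le> ip m (\<lambda>i. b i - mulv m n A x i) y" unfolding ip_def
  proof (rule sum_nonneg)
    fix i assume "i \<in> {..<m}"
    then show "0 \<le> (b i - mulv m n A x i) * y i" using assms unfolding lin_ok_def
      by (cases "i < mI") auto
  qed
  have "ip n (\<lambda>j. tmulv m n A y j + c j) x + ip m (\<lambda>i. b i - mulv m n A x i) y = 0"
    using gap_identity[of n c x m b y A] assms unfolding lin_ok_def by simp
  then show "ip n (\<lambda>j. tmulv m n A y j + c j) x = 0" "ip m (\<lambda>i. b i - mulv m n A x i) y = 0"
    using P D by linarith+
qed

lemma omega_of_lin:
  assumes xv: "x \<in> vecs n" and yv: "y \<in> vecs m" and L: "lin_ok x y"
  shows "(x, y) \<in> Omega n m mI nb A b c"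
proof -
  define w where "w i = - (tmulv m n A y i + c i)" for i
  define w' where "w' i = mulv m n A x i - b i" for i
  have xn: "x \<in> nonneg_first n nb" using xv L by (simp add: nonneg_first_def lin_ok_def)
  have yn: "y \<in> nonneg_first m mI" using yv L by (simp add: nonneg_first_def lin_ok_def)
  have "w \<in> ncone n (nonneg_first n nb) x"
  proof (rule ncone_I[OF xn])
    show "w \<in> vecs n" using cv by (simp add: vecs_def w_def tmulv_def)
    show "\<forall>i<nb. w i \<le> 0"
    proof (intro allI impI)
      fix i assume "i < nb"
      then have "i < n" using nbn by simp
      then have "0 \<le> tmulv m n A y i + c i" using L unfolding lin_ok_def by blast
      then show "w i \<le> 0" by (simp add: w_def)
    qed
    show "\<forall>i. nb \<le> i \<and> i < n \<longrightarrow> w i = 0" using L by (auto simp: lin_ok_def w_def)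
    have "ip n w x = - ip n (\<lambda>j. tmulv m n A y j + c j) x" unfolding w_def by (rule ip_neg)
    then show "ip n w x = 0" using compl_parts[OF L] by simp
  qed
  moreover have "w' \<in> ncone m (nonneg_first m mI) y"
  proof (rule ncone_I[OF yn])
    show "w' \<in> vecs m" using bv by (simp add: vecs_def w'_def mulv_def)
    show "\<forall>i<mI. w' i \<le> 0"
    proof (intro allI impI)
      fix i assume "i < mI"
      then have "i < m" using mIm by simp
      then have "mulv m n A x i \<le> b i" using L unfolding lin_ok_def by blast
      then show "w' i \<le> 0" by (simp add: w'_def)
    qed
    show "\<forall>i. mI \<le> i \<and> i < m \<longrightarrow> w' i = 0" using L by (auto simp: lin_ok_def w'_def)
    have "w' = (\<lambda>i. - (b i - mulv m n A x i))" by (auto simp: w'_def)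
    then have "ip m w' y = - ip m (\<lambda>i. b i - mulv m n A x i) y" using ip_neg by metis
    then show "ip m w' y = 0" using compl_parts[OF L] by simp
  qed
  moreover have "(\<lambda>_. 0) = (\<lambda>i. c i + tmulv m n A y i + w i)" by (auto simp: w_def)
  moreover have "(\<lambda>_. 0) = (\<lambda>i. b i - mulv m n A x i + w' i)" by (auto simp: w'_def)
  moreover have "(\<lambda>_::nat. 0::real) \<in> vecs n" "(\<lambda>_::nat. 0::real) \<in> vecs m" by (simp_all add: vecs_def)
  ultimately have "((\<lambda>_. 0), (\<lambda>_. 0)) \<in> Tl n m mI nb A b c x y"
    unfolding Tl_def mem_Collect_eq prod.case by blast
  then show ?thesis using xv yv unfolding Omega_def mem_Collect_eq prod.case by blast
qed

end

lemma nrm_sq: "(nrm N v)\<^sup>2 = (\<Sum>i<N. (v i)\<^sup>2)"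
proof -
  have "0 \<le> ip N v v" unfolding ip_def by (rule sum_nonneg) simp
  then show ?thesis unfolding nrm_def by (simp add: ip_def power2_eq_square)
qed

lemma ip_self_nonneg: "0 \<le> ip N v v"
  unfolding ip_def by (rule sum_nonneg) simp

lemma nrm_nonneg: "0 \<le> nrm N v"
  unfolding nrm_def using ip_self_nonneg by simp

lemma comp_le_nrm: "j < N \<Longrightarrow> \<bar>v j\<bar> \<le> nrm N v"
proof -
  assume j: "j < N"
  have "(v j)\<^sup>2 \<le> (\<Sum>i<N. (v i)\<^sup>2)" by (rule member_le_sum) (use j in auto)
  then have "(v j)\<^sup>2 \<le> (nrm N v)\<^sup>2" by (simp add: nrm_sq)
  then have "\<bar>v j\<bar> \<le> \<bar>nrm N v\<bar>" by (simp only: abs_le_square_iff)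
  then show ?thesis using nrm_nonneg[of N v] by simp
qed

lemma sum_list_le_len: "(\<forall>r\<in>set L. f r \<le> (B::real)) \<Longrightarrow> sum_list (map f L) \<le> real (length L) * B"
  by (induction L) (auto simp: algebra_simps)

context lpctx
begin

abbreviation "res x y \<equiv> residual n m mI nb A b c x y"

lemma res_nonneg: "0 \<le> res x y"
  unfolding residual_def by simp

lemma res_gap: "\<bar>ip n c x + ip m b y\<bar> \<le> res x y"
proof -
  have "sqrt ((ip n c x + ip m b y)\<^sup>2) \<le> res x y" unfolding residual_def
    by (rule real_sqrt_le_mono) simp
  then show ?thesis by simp
qed

lemma res_pm: "j < n \<Longrightarrow> \<bar>projm nb (\<lambda>i. tmulv m n A y i + c i) j\<bar> \<le> res x y"
proof -
  assume j: "j < n"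
  let ?v = "projm nb (\<lambda>i. tmulv m n A y i + c i)"
  have "sqrt ((nrm n ?v)\<^sup>2) \<le> res x y" unfolding residual_def
    by (rule real_sqrt_le_mono) simp
  then have "nrm n ?v \<le> res x y" using nrm_nonneg by simp
  then show ?thesis using comp_le_nrm[OF j, of ?v] by simp
qed

lemma res_pp: "i < m \<Longrightarrow> \<bar>projp mI (\<lambda>i. mulv m n A x i - b i) i\<bar> \<le> res x y"
proof -
  assume i: "i < m"
  let ?v = "projp mI (\<lambda>i. mulv m n A x i - b i)"
  have "sqrt ((nrm m ?v)\<^sup>2) \<le> res x y" unfolding residual_def
    by (rule real_sqrt_le_mono) simp
  then have "nrm m ?v \<le> res x y" using nrm_nonneg by simp
  then show ?thesis using comp_le_nrm[OF i, of ?v] by simp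
qed

lemma row_viol_le:
  assumes xs: "\<forall>j<nb. 0 \<le> x j" and ys: "\<forall>i<mI. 0 \<le> y i"
  shows "\<forall>r\<in>set ROm. max 0 (ip (n + m) (fst r) (pack x y) - snd r) \<le> res x y"
proof -
  have R0: "0 \<le> res x y" by (rule res_nonneg)
  have g: "max 0 (ip (n + m) (fst gaprow) (pack x y) - snd gaprow) \<le> res x y"
    using res_gap[of x y] R0 by (simp add: ev_gap snd_rows)
  have ng: "max 0 (ip (n + m) (fst ngaprow) (pack x y) - snd ngaprow) \<le> res x y"
    using res_gap[of x y] R0 by (simp add: ev_ngap snd_rows)
  have sx: "max 0 (ip (n + m) (fst (sxr j)) (pack x y) - snd (sxr j)) \<le> res x y" if "j < nb" for j
    using that nbn xs R0 by (simp add: ev_sx snd_rows)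
  have sy: "max 0 (ip (n + m) (fst (syr i)) (pack x y) - snd (syr i)) \<le> res x y" if "i < mI" for i
    using that mIm ys R0 by (simp add: ev_sy snd_rows)
  have d1: "max 0 (ip (n + m) (fst (d1r j)) (pack x y) - snd (d1r j)) \<le> res x y" if j: "j < n" for j
  proof -
    have "max 0 (- tmulv m n A y j - c j) \<le> \<bar>projm nb (\<lambda>i. tmulv m n A y i + c i) j\<bar>"
      by (auto simp: projm_def)
    then show ?thesis using res_pm[OF j, of y x] j by (simp add: ev_d1 snd_rows)
  qed
  have d2: "max 0 (ip (n + m) (fst (d2r j)) (pack x y) - snd (d2r j)) \<le> res x y" if j: "j < n" for j
  proof -
    have "max 0 ((if j < nb then 0 else tmulv m n A y j) - (if j < nb then 0 else - c j))
        \<le> \<bar>projm nb (\<lambda>i. tmulv m n A y i + c i) j\<bar>"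
      by (auto simp: projm_def)
    then show ?thesis using res_pm[OF j, of y x] j by (simp only: ev_d2 snd_rows)
  qed
  have p1: "max 0 (ip (n + m) (fst (p1r i)) (pack x y) - snd (p1r i)) \<le> res x y" if i: "i < m" for i
  proof -
    have "max 0 (mulv m n A x i - b i) \<le> \<bar>projp mI (\<lambda>i. mulv m n A x i - b i) i\<bar>"
      by (auto simp: projp_def)
    then show ?thesis using res_pp[OF i, of x y] i by (simp add: ev_p1 snd_rows)
  qed
  have p2: "max 0 (ip (n + m) (fst (p2r i)) (pack x y) - snd (p2r i)) \<le> res x y" if i: "i < m" for i
  proof -
    have "max 0 ((if i < mI then 0 else - mulv m n A x i) - (if i < mI then 0 else - b i))
        \<le> \<bar>projp mI (\<lambda>i. mulv m n A x i - b i) i\<bar>"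
      by (auto simp: projp_def)
    then show ?thesis using res_pp[OF i, of x y] i by (simp only: ev_p2 snd_rows)
  qed
  show ?thesis unfolding ROm_def using g ng sx sy d1 d2 p1 p2 by auto
qed

lemma viol_le:
  assumes "\<forall>j<nb. 0 \<le> x j" and "\<forall>i<mI. 0 \<le> y i"
  shows "viol (n + m) ROm (pack x y) \<le> real (length ROm) * res x y"
  unfolding viol_def by (rule sum_list_le_len) (rule row_viol_le[OF assms])

end

lemma sum_sq_le: "(\<forall>i<N. \<bar>f i\<bar> \<le> (D::real)) \<Longrightarrow> (\<Sum>i<N. (f i)\<^sup>2) \<le> real N * D\<^sup>2"
proof -
  assume h: "\<forall>i<N. \<bar>f i\<bar> \<le> D"
  have "(\<Sum>i<N. (f i)\<^sup>2) \<le> (\<Sum>i<N. D\<^sup>2)"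
  proof (rule sum_mono)
    fix i assume "i \<in> {..<N}"
    then have "\<bar>f i\<bar> \<le> D" using h by simp
    then show "(f i)\<^sup>2 \<le> D\<^sup>2" by (metis abs_ge_zero abs_le_square_iff abs_of_nonneg order.trans power2_abs)
  qed
  then show ?thesis by simp
qed

context lpctx
begin

lemma dist_le:
  assumes "(x', y') \<in> Omega n m mI nb A b c"
  shows "dist_Omega n m mI nb A b c x y \<le> pnrm n m (\<lambda>i. x i - x' i) (\<lambda>i. y i - y' i)"
  unfolding dist_Omega_def
proof (rule cInf_lower)
  show "pnrm n m (\<lambda>i. x i - x' i) (\<lambda>i. y i - y' i) \<in> {pnrm n m (\<lambda>i. x i - x' i) (\<lambda>i. y i - y' i) |x' y'. (x', y') \<in> Omega n m mI nb A b c}"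
    using assms by blast
  show "bdd_below {pnrm n m (\<lambda>i. x i - x' i) (\<lambda>i. y i - y' i) |x' y'. (x', y') \<in> Omega n m mI nb A b c}"
    by (rule bdd_belowI[of _ 0]) (auto simp: pnrm_def)
qed

lemma theta_exists:
  assumes "x0 \<in> vecs n" "y0 \<in> vecs m" "lin_ok x0 y0"
  shows "\<exists>t\<ge>0. \<forall>x y. x \<in> nonneg_first n nb \<and> y \<in> nonneg_first m mI \<longrightarrow>
            dist_Omega n m mI nb A b c x y \<le> t * res x y"
proof -
  have "sat (n + m) ROm (pack x0 y0)" using assms sat_ROm by simp
  from hoffman[OF this] obtain H where H: "H \<ge> 0"
    "\<forall>z. \<exists>p. sat (n + m) ROm p \<and> (\<forall>i<n + m. \<bar>z i - p i\<bar> \<le> H * viol (n + m) ROm z)" by blast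
  define L where "L = real (length ROm)"
  define t where "t = sqrt (real (n + m)) * (H * L)"
  show ?thesis
  proof (intro exI[of _ t] conjI allI impI)
    show "0 \<le> t" using H(1) by (simp add: t_def L_def)
    fix x y assume xy: "x \<in> nonneg_first n nb \<and> y \<in> nonneg_first m mI"
    then have xs: "\<forall>j<nb. 0 \<le> x j" and ys: "\<forall>i<mI. 0 \<le> y i" by (auto simp: nonneg_first_def)
    define D where "D = H * viol (n + m) ROm (pack x y)"
    obtain p where p: "sat (n + m) ROm p" "\<forall>i<n + m. \<bar>pack x y i - p i\<bar> \<le> D"
      using H(2) unfolding D_def by blast
    define x' where "x' i = (if i < n then p i else 0)" for i
    define y' where "y' i = (if i < m then p (n + i) else 0)" for i
    have xv': "x' \<in> vecs n" and yv': "y' \<in> vecs m" by (auto simp: vecs_def x'_def y'_def)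
    have "sat (n + m) ROm (pack x' y') = sat (n + m) ROm p"
      by (rule sat_cong) (auto simp: pack_def x'_def y'_def)
    then have "lin_ok x' y'" using p(1) sat_ROm by simp
    then have om: "(x', y') \<in> Omega n m mI nb A b c" by (rule omega_of_lin[OF xv' yv'])
    have dx: "\<forall>i<n. \<bar>x i - x' i\<bar> \<le> D"
    proof (intro allI impI)
      fix i assume i: "i < n"
      then show "\<bar>x i - x' i\<bar> \<le> D" using p(2)[rule_format, of i] by (simp add: pack_def x'_def)
    qed
    have dy: "\<forall>i<m. \<bar>y i - y' i\<bar> \<le> D"
    proof (intro allI impI)
      fix i assume i: "i < m"
      then show "\<bar>y i - y' i\<bar> \<le> D" using p(2)[rule_format, of "n + i"] by (simp add: pack_def y'_def)
    qed
    have "(pnrm n m (\<lambda>i. x i - x' i) (\<lambda>i. y i - y' i))\<^sup>2 \<le> real n * D\<^sup>2 + real m * D\<^sup>2"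
    proof -
      have "(pnrm n m (\<lambda>i. x i - x' i) (\<lambda>i. y i - y' i))\<^sup>2
          = (\<Sum>i<n. (x i - x' i)\<^sup>2) + (\<Sum>i<m. (y i - y' i)\<^sup>2)"
        unfolding pnrm_def by (simp add: nrm_sq add_nonneg_nonneg sum_nonneg)
      also have "\<dots> \<le> real n * D\<^sup>2 + real m * D\<^sup>2"
        using sum_sq_le[OF dx] sum_sq_le[OF dy] by (rule add_mono)
      finally show ?thesis .
    qed
    then have sq: "(pnrm n m (\<lambda>i. x i - x' i) (\<lambda>i. y i - y' i))\<^sup>2 \<le> (sqrt (real (n + m)) * D)\<^sup>2"
      by (simp add: power_mult_distrib algebra_simps)
    have "0 \<le> D" unfolding D_def using H(1) viol_nonneg by simp
    then have "0 \<le> sqrt (real (n + m)) * D" by simp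
    from power2_le_imp_le[OF sq this]
    have "pnrm n m (\<lambda>i. x i - x' i) (\<lambda>i. y i - y' i) \<le> sqrt (real (n + m)) * D" .
    moreover have "D \<le> H * (L * res x y)" unfolding D_def L_def
      using viol_le[OF xs ys] H(1) by (rule mult_left_mono)
    moreover have "sqrt (real (n + m)) * D \<le> sqrt (real (n + m)) * (H * (L * res x y))"
      using \<open>D \<le> H * (L * res x y)\<close> by (rule mult_left_mono) simp
    ultimately have "pnrm n m (\<lambda>i. x i - x' i) (\<lambda>i. y i - y' i) \<le> sqrt (real (n + m)) * (H * (L * res x y))"
      by linarith
    then have "pnrm n m (\<lambda>i. x i - x' i) (\<lambda>i. y i - y' i) \<le> t * res x y"
      by (simp add: t_def mult.assoc)
    then show "dist_Omega n m mI nb A b c x y \<le> t * res x y"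
      using dist_le[OF om, of x y] by linarith
  qed
qed

end

context lpctx
begin

lemma pack_sq: "(\<Sum>i<n + m. (pack v u i)\<^sup>2) = (nrm n v)\<^sup>2 + (nrm m u)\<^sup>2"
proof -
  have "(\<Sum>i<n + m. (pack v u i)\<^sup>2) = (\<Sum>i<n. (pack v u i)\<^sup>2) + (\<Sum>i<m. (pack v u (n + i))\<^sup>2)"
    by (rule sum_split)
  also have "(\<Sum>i<n. (pack v u i)\<^sup>2) = (\<Sum>i<n. (v i)\<^sup>2)" by (rule sum.cong) (auto simp: pack_def)
  also have "(\<Sum>i<m. (pack v u (n + i))\<^sup>2) = (\<Sum>i<m. (u i)\<^sup>2)" by (simp add: pack_def)
  finally show ?thesis by (simp add: nrm_sq)
qed

lemma pnrm_sq: "(pnrm n m v u)\<^sup>2 = (nrm n v)\<^sup>2 + (nrm m u)\<^sup>2"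
  unfolding pnrm_def by simp

lemma cs_pair: "(ip n v x + ip m u y)\<^sup>2 \<le> (pnrm n m v u)\<^sup>2 * (pnrm n m x y)\<^sup>2"
proof -
  have "ip (n + m) (pack v u) (pack x y) = ip n (pack v u) x + ip m (\<lambda>i. pack v u (n + i)) y"
    by (rule ip_pack)
  also have "ip n (pack v u) x = ip n v x" by (rule ip_cong) (auto simp: pack_def)
  also have "(\<lambda>i. pack v u (n + i)) = u" by (auto simp: pack_def)
  finally have e: "ip (n + m) (pack v u) (pack x y) = ip n v x + ip m u y" .
  have "(ip (n + m) (pack v u) (pack x y))\<^sup>2 \<le> (\<Sum>i<n + m. (pack v u i)\<^sup>2) * (\<Sum>i<n + m. (pack x y i)\<^sup>2)"
    unfolding ip_def by (rule Cauchy_Schwarz_ineq_sum)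
  then show ?thesis using e by (simp add: pack_sq pnrm_sq)
qed

lemma tl_bound:
  assumes xs: "\<forall>j<nb. 0 \<le> x j" and ys: "\<forall>i<mI. 0 \<le> y i"
    and T: "(v, u) \<in> Tl n m mI nb A b c x y"
  shows "res x y \<le> sqrt ((pnrm n m x y)\<^sup>2 + 1) * pnrm n m v u"
proof -
  obtain w w' where w: "w \<in> ncone n (nonneg_first n nb) x" "v = (\<lambda>i. c i + tmulv m n A y i + w i)"
    and w': "w' \<in> ncone m (nonneg_first m mI) y" "u = (\<lambda>i. b i - mulv m n A x i + w' i)"
    using T unfolding Tl_def by blast
  note W = ncone_D[OF w(1) nbn] and W' = ncone_D[OF w'(1) mIm]
  have gv: "ip n v x = ip n c x + ip n (tmulv m n A y) x"
    unfolding w(2) using W(5) by (simp add: ip_add)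
  have gu: "ip m u y = ip m b y - ip m (mulv m n A x) y"
    unfolding w'(2) using W'(5) by (simp add: ip_add ip_sub)
  have G: "ip n c x + ip m b y = ip n v x + ip m u y"
    using gv gu ip_swap[of n m A y x] by simp
  have pm: "(nrm n (projm nb (\<lambda>i. tmulv m n A y i + c i)))\<^sup>2 \<le> (nrm n v)\<^sup>2"
    unfolding nrm_sq
  proof (rule sum_mono)
    fix i assume "i \<in> {..<n}"
    then have i: "i < n" by simp
    have s: "tmulv m n A y i + c i = v i - w i" unfolding w(2) by simp
    have "\<bar>projm nb (\<lambda>i. tmulv m n A y i + c i) i\<bar> \<le> \<bar>v i\<bar>"
    proof (cases "i < nb")
      case True
      then have "w i \<le> 0" using W(3) by simp
      then show ?thesis using True by (auto simp: projm_def s)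
    next
      case False
      then have "w i = 0" using W(4) i by simp
      then show ?thesis using False by (simp add: projm_def s)
    qed
    then show "(projm nb (\<lambda>i. tmulv m n A y i + c i) i)\<^sup>2 \<le> (v i)\<^sup>2"
      by (simp only: abs_le_square_iff)
  qed
  have pp: "(nrm m (projp mI (\<lambda>i. mulv m n A x i - b i)))\<^sup>2 \<le> (nrm m u)\<^sup>2"
    unfolding nrm_sq
  proof (rule sum_mono)
    fix i assume "i \<in> {..<m}"
    then have i: "i < m" by simp
    have s: "mulv m n A x i - b i = w' i - u i" unfolding w'(2) by simp
    have "\<bar>projp mI (\<lambda>i. mulv m n A x i - b i) i\<bar> \<le> \<bar>u i\<bar>"
    proof (cases "i < mI")
      case True
      then have "w' i \<le> 0" using W'(3) by simp
      then show ?thesis using True by (auto simp: projp_def s)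
    next
      case False
      then have "w' i = 0" using W'(4) i by simp
      then show ?thesis using False by (simp add: projp_def s)
    qed
    then show "(projp mI (\<lambda>i. mulv m n A x i - b i) i)\<^sup>2 \<le> (u i)\<^sup>2"
      by (simp only: abs_le_square_iff)
  qed
  have "(ip n c x + ip m b y)\<^sup>2 \<le> (pnrm n m v u)\<^sup>2 * (pnrm n m x y)\<^sup>2"
    using cs_pair G by simp
  then have "(ip n c x + ip m b y)\<^sup>2 + (nrm n (projm nb (\<lambda>i. tmulv m n A y i + c i)))\<^sup>2
      + (nrm m (projp mI (\<lambda>i. mulv m n A x i - b i)))\<^sup>2
      \<le> ((pnrm n m x y)\<^sup>2 + 1) * (pnrm n m v u)\<^sup>2"
    using pm pp by (simp add: pnrm_sq algebra_simps)
  then have "res x y \<le> sqrt (((pnrm n m x y)\<^sup>2 + 1) * (pnrm n m v u)\<^sup>2)"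
    unfolding residual_def by (rule real_sqrt_le_mono)
  also have "\<dots> = sqrt ((pnrm n m x y)\<^sup>2 + 1) * pnrm n m v u"
    by (simp add: real_sqrt_mult pnrm_def)
  finally show ?thesis .
qed

end

context lpctx
begin

definition f1 :: "nat \<Rightarrow> row" where "f1 i = ((\<lambda>j. A i j), b i)"
definition f2 :: "nat \<Rightarrow> row" where
  "f2 i = ((\<lambda>j. if i < mI then 0 else - A i j), if i < mI then 0 else - b i)"
definition f3 :: "nat \<Rightarrow> row" where "f3 j = ((\<lambda>k. if k = j then -1 else 0), 0)"
definition RF :: "row list" where "RF = map f1 [0..<m] @ map f2 [0..<m] @ map f3 [0..<nb]"

lemma sat_RF: "sat n RF x \<longleftrightarrow> (\<forall>i<m. mulv m n A x i \<le> b i) \<and> (\<forall>i<m. mI \<le> i \<longrightarrow> b i \<le> mulv m n A x i)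
   \<and> (\<forall>j<nb. 0 \<le> x j)"
proof -
  have e1: "ip n (fst (f1 i)) x = mulv m n A x i" if "i < m" for i
    using m_ip[OF that] by (simp add: f1_def)
  have e2: "ip n (fst (f2 i)) x = (if i < mI then 0 else - mulv m n A x i)" if "i < m" for i
    using m_ip[OF that] by (simp add: f2_def ip_neg)
  have e3: "ip n (fst (f3 j)) x = - x j" if "j < nb" for j
    using ip_delta1[of j n "-1" x] that nbn by (simp add: f3_def)
  have s1: "(\<forall>i<m. ip n (fst (f1 i)) x \<le> snd (f1 i)) \<longleftrightarrow> (\<forall>i<m. mulv m n A x i \<le> b i)"
    using e1 by (simp add: f1_def)
  have s2: "(\<forall>i<m. ip n (fst (f2 i)) x \<le> snd (f2 i)) \<longleftrightarrow> (\<forall>i<m. mI \<le> i \<longrightarrow> b i \<le> mulv m n A x i)"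
    using e2 by (auto simp: f2_def not_less)
  have s3: "(\<forall>j<nb. ip n (fst (f3 j)) x \<le> snd (f3 j)) \<longleftrightarrow> (\<forall>j<nb. 0 \<le> x j)"
    using e3 by (simp add: f3_def)
  show ?thesis unfolding RF_def sat_append sat_map_upt s1 s2 s3 ..
qed

lemma strong_duality:
  assumes "lp_has_optimal n m mI nb A b c"
  shows "\<exists>x y. x \<in> vecs n \<and> y \<in> vecs m \<and> lin_ok x y"
proof -
  obtain xs where feas: "lp_feasible n m mI nb A b xs"
    and opt: "\<forall>z. lp_feasible n m mI nb A b z \<longrightarrow> ip n c xs \<le> ip n c z"
    using assms unfolding lp_has_optimal_def by blast
  have xsv: "xs \<in> vecs n" and pr1: "\<forall>i<mI. mulv m n A xs i \<le> b i"
    and pr2: "\<forall>i. mI \<le> i \<and> i < m \<longrightarrow> mulv m n A xs i = b i" and xsn: "\<forall>i<nb. 0 \<le> xs i"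
    using feas unfolding lp_feasible_def by auto
  have satxs: "sat n RF xs" unfolding sat_RF
  proof (intro conjI allI impI)
    fix i assume i: "i < m"
    show "mulv m n A xs i \<le> b i" using pr1 pr2 i by (cases "i < mI") auto
    assume "mI \<le> i" then show "b i \<le> mulv m n A xs i" using pr2 i by simp
  next
    fix j assume "j < nb" then show "0 \<le> xs j" using xsn by simp
  qed
  have val: "\<forall>z. sat n RF z \<longrightarrow> ip n (\<lambda>j. - c j) z \<le> - ip n c xs"
  proof (intro allI impI)
    fix z assume z: "sat n RF z"
    define zt where "zt i = (if i < n then z i else 0)" for i
    have mz: "mulv m n A zt = mulv m n A z" unfolding mulv_def zt_def by (rule ext) simp
    have bz: "b i = 0" if "\<not> i < m" for i using bv that by (simp add: vecs_def)
    have mz0: "mulv m n A z i = 0" if "\<not> i < m" for i using that by (simp add: mulv_def)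
    have "lp_feasible n m mI nb A b zt" unfolding lp_feasible_def
    proof (intro conjI allI impI)
      show "zt \<in> vecs n" by (simp add: vecs_def zt_def)
      fix i assume i: "i < mI"
      show "mulv m n A zt i \<le> b i"
      proof (cases "i < m")
        case True then show ?thesis using z mz by (simp add: sat_RF)
      next
        case False then show ?thesis using mz mz0 bz by simp
      qed
    next
      fix i assume i: "mI \<le> i \<and> i < m"
      then show "mulv m n A zt i = b i" using z mz by (auto simp: sat_RF intro: antisym)
    next
      fix i assume "i < nb" then show "0 \<le> zt i" using z nbn by (simp add: sat_RF zt_def)
    qed
    then have "ip n c xs \<le> ip n c zt" using opt by blast
    moreover have "ip n c zt = ip n c z" by (rule ip_cong) (auto simp: zt_def)
    ultimately show "ip n (\<lambda>j. - c j) z \<le> - ip n c xs" by (simp add: ip_neg)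
  qed
  obtain e where e: "e \<in> rcone RF" "\<forall>j<n. fst e j = - c j" "snd e \<le> - ip n c xs"
    using affine_farkas[OF satxs val] by blast
  obtain e1 e23 where E1: "e1 \<in> rcone (map f1 [0..<m])" "e23 \<in> rcone (map f2 [0..<m] @ map f3 [0..<nb])"
    "e = radd e1 e23" using rcone_append e(1) unfolding RF_def by blast
  obtain e2 e3 where E2: "e2 \<in> rcone (map f2 [0..<m])" "e3 \<in> rcone (map f3 [0..<nb])" "e23 = radd e2 e3"
    using rcone_append E1(2) by blast
  obtain u1 where u1: "\<forall>i. 0 \<le> u1 i" "e1 = ((\<lambda>j. \<Sum>i<m. u1 i * fst (f1 i) j), (\<Sum>i<m. u1 i * snd (f1 i)))"
    using rcone_upt[OF E1(1)] by blast
  obtain u2 where u2: "\<forall>i. 0 \<le> u2 i" "e2 = ((\<lambda>j. \<Sum>i<m. u2 i * fst (f2 i) j), (\<Sum>i<m. u2 i * snd (f2 i)))"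
    using rcone_upt[OF E2(1)] by blast
  obtain u3 where u3: "\<forall>i. 0 \<le> u3 i" "e3 = ((\<lambda>j. \<Sum>i<nb. u3 i * fst (f3 i) j), (\<Sum>i<nb. u3 i * snd (f3 i)))"
    using rcone_upt[OF E2(2)] by blast
  define lam where "lam i = (if i < m then u1 i - (if i < mI then 0 else u2 i) else 0)" for i
  have lamv: "lam \<in> vecs m" by (simp add: vecs_def lam_def)
  have fe: "fst e j = fst e1 j + fst e2 j + fst e3 j" for j
    using E1(3) E2(3) by (simp add: radd_def)
  have se: "snd e = snd e1 + snd e2 + snd e3"
    using E1(3) E2(3) by (simp add: radd_def)
  have f3s: "fst e3 j = (if j < nb then - u3 j else 0)" for j
  proof -
    have "fst e3 j = (\<Sum>i<nb. if i = j then - u3 j else 0)"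
      unfolding u3(2) f3_def fst_conv by (rule sum.cong) auto
    also have "\<dots> = (if j < nb then - u3 j else 0)" by (subst sum.delta) auto
    finally show ?thesis .
  qed
  have s3: "snd e3 = 0" unfolding u3(2) f3_def by simp
  have tm: "tmulv m n A lam j = fst e1 j + fst e2 j" if j: "j < n" for j
  proof -
    have "tmulv m n A lam j = (\<Sum>i<m. A i j * lam i)" using j by (simp add: tmulv_def)
    also have "\<dots> = (\<Sum>i<m. u1 i * fst (f1 i) j + u2 i * fst (f2 i) j)"
      by (rule sum.cong) (auto simp: lam_def f1_def f2_def algebra_simps)
    also have "\<dots> = fst e1 j + fst e2 j" unfolding u1(2) u2(2) by (simp add: sum.distrib)
    finally show ?thesis .
  qed
  have dual: "tmulv m n A lam j + c j = (if j < nb then u3 j else 0)" if j: "j < n" for j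
    using tm[OF j] fe[of j] e(2) j f3s[of j] by auto
  have bl: "ip m b lam = snd e1 + snd e2"
  proof -
    have "ip m b lam = (\<Sum>i<m. u1 i * snd (f1 i) + u2 i * snd (f2 i))"
      unfolding ip_def by (rule sum.cong) (auto simp: lam_def f1_def f2_def algebra_simps)
    also have "\<dots> = snd e1 + snd e2" unfolding u1(2) u2(2) by (simp add: sum.distrib)
    finally show ?thesis .
  qed
  have gle: "ip n c xs + ip m b lam \<le> 0" using bl se s3 e(3) by simp
  have P: "0 \<le> ip n (\<lambda>j. tmulv m n A lam j + c j) xs" unfolding ip_def
  proof (rule sum_nonneg)
    fix j assume "j \<in> {..<n}"
    then show "0 \<le> (tmulv m n A lam j + c j) * xs j" using dual[of j] u3(1) xsn by auto
  qed
  have D: "0 \<le> ip m (\<lambda>i. b i - mulv m n A xs i) lam" unfolding ip_def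
  proof (rule sum_nonneg)
    fix i assume i: "i \<in> {..<m}"
    show "0 \<le> (b i - mulv m n A xs i) * lam i"
    proof (cases "i < mI")
      case True then show ?thesis using i pr1 u1(1) by (simp add: lam_def)
    next
      case False then show ?thesis using i pr2 by simp
    qed
  qed
  have gap: "ip n c xs + ip m b lam = 0"
    using gap_identity[of n c xs m b lam A] P D gle by linarith
  have "lin_ok xs lam" unfolding lin_ok_def
  proof (intro conjI allI impI)
    show "ip n c xs + ip m b lam = 0" by (rule gap)
    fix j assume "j < nb" then show "0 \<le> xs j" using xsn by simp
  next
    fix i assume "i < mI" then show "0 \<le> lam i" using u1(1) mIm by (simp add: lam_def)
  next
    fix j assume "j < n" then show "0 \<le> tmulv m n A lam j + c j" using dual[of j] u3(1) by simp
  next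
    fix j assume "nb \<le> j \<and> j < n" then show "tmulv m n A lam j + c j = 0" using dual[of j] by simp
  next
    fix i assume i: "i < m" then show "mulv m n A xs i \<le> b i" using pr1 pr2 by (cases "i < mI") auto
  next
    fix i assume "mI \<le> i \<and> i < m" then show "mulv m n A xs i = b i" using pr2 by simp
  qed
  then show ?thesis using xsv lamv by blast
qed

end

theorem lemma3:
  fixes n m mI nb :: nat and A :: "nat \<Rightarrow> nat \<Rightarrow> real" and b c x y :: "nat \<Rightarrow> real"
  assumes "1 \<le> nb" and "nb \<le> n" and "mI \<le> m"
    and "c \<in> vecs n" and "b \<in> vecs m"
    and "lp_has_optimal n m mI nb A b c"
    and "x \<in> vecs n" and "y \<in> vecs m"
    and "\<forall>i<nb. 0 \<le> x i" and "\<forall>j<mI. 0 \<le> y j"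
  shows "dist_Omega n m mI nb A b c x y
           \<le> theta n m mI nb A b c * sqrt ((pnrm n m x y)\<^sup>2 + 1) * dist0_Tl n m mI nb A b c x y"
proof -
  interpret L: lpctx n m mI nb A b c using assms by unfold_locales auto
  obtain x0 y0 where xy0: "x0 \<in> vecs n" "y0 \<in> vecs m" "L.lin_ok x0 y0"
    using L.strong_duality[OF assms(6)] by blast
  obtain t where t: "t \<ge> 0" "\<forall>x y. x \<in> nonneg_first n nb \<and> y \<in> nonneg_first m mI \<longrightarrow>
      dist_Omega n m mI nb A b c x y \<le> t * residual n m mI nb A b c x y"
    using L.theta_exists[OF xy0] by blast
  define S where "S = {t. 0 \<le> t \<and> (\<forall>x y. x \<in> nonneg_first n nb \<and> y \<in> nonneg_first m mI \<longrightarrow>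
              dist_Omega n m mI nb A b c x y \<le> t * residual n m mI nb A b c x y)}"
  have th: "theta n m mI nb A b c = Inf S" by (simp add: theta_def S_def)
  have tS: "t \<in> S" using t by (simp add: S_def)
  then have Sne: "S \<noteq> {}" by blast
  have th0: "0 \<le> Inf S" by (rule cInf_greatest[OF Sne]) (simp add: S_def)
  have xin: "x \<in> nonneg_first n nb" and yin: "y \<in> nonneg_first m mI"
    using assms by (auto simp: nonneg_first_def)
  define d where "d = dist_Omega n m mI nb A b c x y"
  define r where "r = residual n m mI nb A b c x y"
  have r0: "0 \<le> r" unfolding r_def by (rule L.res_nonneg)
  have dS: "d \<le> s * r" if "s \<in> S" for s using that xin yin by (simp add: S_def d_def r_def)
  have R: "d \<le> Inf S * r"
  proof (cases "r = 0")
    case True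
    then show ?thesis using dS[OF tS] by simp
  next
    case False
    then have rp: "r > 0" using r0 by simp
    have "d / r \<le> Inf S"
    proof (rule cInf_greatest[OF Sne])
      fix s assume "s \<in> S"
      then show "d / r \<le> s" using dS rp by (simp add: divide_le_eq)
    qed
    then show ?thesis using rp by (simp add: divide_le_eq mult.commute)
  qed
  define sq where "sq = sqrt ((pnrm n m x y)\<^sup>2 + 1)"
  have sqp: "sq > 0" unfolding sq_def by (simp add: add_nonneg_pos)
  define TT where "TT = {pnrm n m v u | v u. (v, u) \<in> Tl n m mI nb A b c x y}"
  have w0: "(\<lambda>_. 0) \<in> ncone n (nonneg_first n nb) x"
    by (rule ncone_I[OF xin]) (auto simp: vecs_def ip_def)
  have w0': "(\<lambda>_. 0) \<in> ncone m (nonneg_first m mI) y"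
    by (rule ncone_I[OF yin]) (auto simp: vecs_def ip_def)
  have v0: "(\<lambda>i. c i + tmulv m n A y i + 0) \<in> vecs n" using assms(4) by (simp add: vecs_def tmulv_def)
  have u0: "(\<lambda>i. b i - mulv m n A x i + 0) \<in> vecs m" using assms(5) by (simp add: vecs_def mulv_def)
  have "((\<lambda>i. c i + tmulv m n A y i + 0), (\<lambda>i. b i - mulv m n A x i + 0)) \<in> Tl n m mI nb A b c x y"
    unfolding Tl_def mem_Collect_eq prod.case
  proof (intro conjI)
    show "\<exists>w\<in>ncone n (nonneg_first n nb) x. (\<lambda>i. c i + tmulv m n A y i + 0) = (\<lambda>i. c i + tmulv m n A y i + w i)"
      by (rule bexI[OF _ w0]) simp
    show "\<exists>w\<in>ncone m (nonneg_first m mI) y. (\<lambda>i. b i - mulv m n A x i + 0) = (\<lambda>i. b i - mulv m n A x i + w i)"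
      by (rule bexI[OF _ w0']) simp
  qed (fact v0, fact u0)
  then have TTne: "TT \<noteq> {}" unfolding TT_def by blast
  have "r / sq \<le> Inf TT"
  proof (rule cInf_greatest[OF TTne])
    fix z assume "z \<in> TT"
    then obtain v u where z: "z = pnrm n m v u" "(v, u) \<in> Tl n m mI nb A b c x y" unfolding TT_def by blast
    have "r \<le> sq * z" using L.tl_bound[OF assms(9) assms(10) z(2)] by (simp add: r_def sq_def z(1))
    then show "r / sq \<le> z" using sqp by (simp add: divide_le_eq mult.commute)
  qed
  then have rT: "r \<le> sq * Inf TT" using sqp by (simp add: divide_le_eq mult.commute)
  have dT: "dist0_Tl n m mI nb A b c x y = Inf TT" by (simp add: dist0_Tl_def TT_def)
  have "d \<le> Inf S * (sq * Inf TT)"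
    using R mult_left_mono[OF rT th0] by linarith
  then show ?thesis by (simp add: d_def th sq_def dT mult.assoc)
qed

end
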